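(* Let $(X,Y)$ be random variables on finite sets $\mathcal{X},\mathcal{Y}$ with joint pmf $P_{XY}$, and let $(X^n,Y^n)$ consist of $n$ independent copies of $(X,Y)$. Then for every $0<\epsilon<1$, \[ R^*_\epsilon(X,Y):=\lim_{n\to\infty}\frac1nL_\epsilon(X^n,Y^n)=H(X\triangle Y)=H(X|Y)+H(Y|X). \]
   Context: Setting of the protocol. Party 1 observes $X^n$ and party 2 observes $Y^n$. They may use mutually independent private randomness $U_{\mathcal X}$, $U_{\mathcal Y}$ and shared randomness $U$, all independent of the observations. Tree protocol. A tree protocol is a binary tree whose internal vertices are labelled 1 or 2. At a vertex labelled $i$, party $i$ sends a bit that is a function of its observation, its private randomness and $U$. The protocol moves to the corresponding child and stops at a leaf. The transcript is $\Pi$, and the length is the depth of the tree. Data exchange. A protocol attains $\epsilon$-data exchange if party 1 can produce $\hat Y$ from (its observation, $\Pi$, $U_{\mathcal X}$, $U$) and party 2 can produce $\hat X$ from (its observation, $\Pi$, $U_{\mathcal Y}$, $U$), with $\Pr(\hat X=X^n,\hat Y=Y^n)\ge1-\epsilon$. $L_\epsilon(X^n,Y^n)$ is the infimum of the lengths of such protocols. *)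

theory Defs
  imports "HOL-Probability.Probability"
begin

definition marg_X :: "('x \<times> 'y) pmf \<Rightarrow> 'x \<Rightarrow> real" where
  "marg_X P x = (\<Sum>y\<in>UNIV. pmf P (x, y))"

definition marg_Y :: "('x \<times> 'y) pmf \<Rightarrow> 'y \<Rightarrow> real" where
  "marg_Y P y = (\<Sum>x\<in>UNIV. pmf P (x, y))"

definition cond_entropy_XY :: "('x::finite \<times> 'y::finite) pmf \<Rightarrow> real" where
  "cond_entropy_XY P = (\<Sum>x\<in>UNIV. \<Sum>y\<in>UNIV.
      if pmf P (x, y) = 0 then 0
      else - pmf P (x, y) * log 2 (pmf P (x, y) / marg_Y P y))"

definition cond_entropy_YX :: "('x::finite \<times> 'y::finite) pmf \<Rightarrow> real" where
  "cond_entropy_YX P = (\<Sum>x\<in>UNIV. \<Sum>y\<in>UNIV.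
      if pmf P (x, y) = 0 then 0
      else - pmf P (x, y) * log 2 (pmf P (x, y) / marg_X P x))"

fun iid_pmf :: "nat \<Rightarrow> 'a pmf \<Rightarrow> 'a list pmf" where
  "iid_pmf 0 p = return_pmf []"
| "iid_pmf (Suc n) p = do { x \<leftarrow> p; xs \<leftarrow> iid_pmf n p; return_pmf (x # xs) }"

text \<open>A binary tree; an internal vertex labelled 1 (resp. 2) carries the bit function of
party 1 (resp. 2) applied to its local information (observation, private randomness,
shared randomness). Left child = bit False, right child = bit True.\<close>
datatype ('a, 'b) ptree =
    Leaf
  | Node1 "'a \<Rightarrow> bool" "('a, 'b) ptree" "('a, 'b) ptree"
  | Node2 "'b \<Rightarrow> bool" "('a, 'b) ptree" "('a, 'b) ptree"

fun depth :: "('a, 'b) ptree \<Rightarrow> nat" where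
  "depth Leaf = 0"
| "depth (Node1 f l r) = Suc (max (depth l) (depth r))"
| "depth (Node2 f l r) = Suc (max (depth l) (depth r))"

fun transcript :: "('a, 'b) ptree \<Rightarrow> 'a \<Rightarrow> 'b \<Rightarrow> bool list" where
  "transcript Leaf a b = []"
| "transcript (Node1 f l r) a b = f a # transcript (if f a then r else l) a b"
| "transcript (Node2 f l r) a b = f b # transcript (if f b then r else l) a b"

text \<open>Randomness: U_X, U_Y, U are independent, with arbitrary discrete distributions
(values in nat), independent of the observations. Local information of party 1 is
(X^n, U_X, U), of party 2 is (Y^n, U_Y, U).\<close>

type_synonym ('x, 'y) protocol = "('x list \<times> nat \<times> nat, 'y list \<times> nat \<times> nat) ptree"

definition success_prob ::
  "('x \<times> 'y) pmf \<Rightarrow> nat \<Rightarrow> nat pmf \<Rightarrow> nat pmf \<Rightarrow> nat pmf \<Rightarrow> ('x, 'y) protocol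
   \<Rightarrow> ('x list \<Rightarrow> bool list \<Rightarrow> nat \<Rightarrow> nat \<Rightarrow> 'y list)
   \<Rightarrow> ('y list \<Rightarrow> bool list \<Rightarrow> nat \<Rightarrow> nat \<Rightarrow> 'x list) \<Rightarrow> real" where
  "success_prob P n PUX PUY PU T dec1 dec2 =
     measure_pmf.prob
       (do { xys \<leftarrow> iid_pmf n P; ux \<leftarrow> PUX; uy \<leftarrow> PUY; u \<leftarrow> PU;
             return_pmf (xys, ux, uy, u) })
       {(xys, ux, uy, u).
          let xs = map fst xys; ys = map snd xys;
              tr = transcript T (xs, ux, u) (ys, uy, u)
          in dec1 xs tr ux u = ys \<and> dec2 ys tr uy u = xs}"

definition L_eps :: "('x \<times> 'y) pmf \<Rightarrow> real \<Rightarrow> nat \<Rightarrow> real" where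
  "L_eps P \<epsilon> n = real (Inf {depth T | T PUX PUY PU dec1 dec2.
        success_prob P n PUX PUY PU T dec1 dec2 \<ge> 1 - \<epsilon>})"

end

theory Submission
  imports Defs
begin


definition Ln :: "nat \<Rightarrow> 'a list set" where "Ln n = {xs. length xs = n}"

lemma finite_Ln: "finite (Ln n :: 'a::finite list set)"
  using finite_lists_length_eq[of "UNIV::'a set" n] by (simp add: Ln_def)

lemma Ln_0: "Ln 0 = {[]}" by (auto simp: Ln_def)

lemma Ln_Suc: "Ln (Suc n) = (\<lambda>(z,zs). z#zs) ` (UNIV \<times> Ln n)"
  by (auto simp: Ln_def length_Suc_conv image_def)

lemma sum_Ln_Suc:
  fixes F :: "'a::finite list \<Rightarrow> 'b::comm_monoid_add"
  shows "(\<Sum>zs\<in>Ln (Suc n). F zs) = (\<Sum>z\<in>UNIV. \<Sum>zs\<in>Ln n. F (z#zs))"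
proof -
  have inj: "inj_on (\<lambda>(z,zs). z#zs) (UNIV \<times> Ln n)" by (auto simp: inj_on_def)
  show ?thesis
    unfolding Ln_Suc sum.reindex[OF inj]
    by (simp add: sum.cartesian_product case_prod_unfold)
qed

lemma sum_prod_Ln:
  fixes w :: "'a::finite \<Rightarrow> real"
  shows "(\<Sum>xs\<in>Ln n. prod_list (map w xs)) = (\<Sum>a\<in>UNIV. w a)^n"
proof (induction n)
  case 0 then show ?case by (simp add: Ln_0)
next
  case (Suc n)
  then show ?case by (simp add: sum_Ln_Suc sum_distrib_left[symmetric] sum_distrib_right[symmetric])
qed

lemma sum_prod_zip:
  fixes F :: "'a::finite \<times> 'b \<Rightarrow> real"
  shows "(\<Sum>xs\<in>Ln (length ys). prod_list (map F (zip xs ys))) = prod_list (map (\<lambda>b. \<Sum>a\<in>UNIV. F(a,b)) ys)"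
proof (induction ys)
  case Nil then show ?case by (simp add: Ln_0)
next
  case (Cons y ys)
  then show ?case by (simp add: sum_Ln_Suc sum_distrib_left[symmetric] sum_distrib_right[symmetric])
qed

lemma iid_Suc_map: "iid_pmf (Suc n) p = map_pmf (\<lambda>(x,xs). x#xs) (pair_pmf p (iid_pmf n p))"
  by (simp add: pair_pmf_def map_pmf_def bind_assoc_pmf bind_return_pmf)

lemma pmf_iid: "pmf (iid_pmf n p) zs = (if length zs = n then prod_list (map (pmf p) zs) else 0)"
proof (induction n arbitrary: zs)
  case 0 then show ?case by (cases zs) (auto simp: pmf_return)
next
  case (Suc n)
  have inj: "inj (\<lambda>(x::'a,xs). x#xs)" by (auto simp: inj_def)
  show ?case
  proof (cases zs)
    case Nil
    have "[] \<notin> set_pmf (iid_pmf (Suc n) p)" unfolding iid_Suc_map by auto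
    then show ?thesis using Nil by (simp add: set_pmf_eq)
  next
    case (Cons z zs')
    have "pmf (iid_pmf (Suc n) p) zs = pmf (pair_pmf p (iid_pmf n p)) (z, zs')"
      unfolding iid_Suc_map Cons using pmf_map_inj'[OF inj, of _ "(z,zs')"] by simp
    then show ?thesis using Suc Cons by (simp add: pmf_pair)
  qed
qed



definition Pn :: "'a pmf \<Rightarrow> 'a list \<Rightarrow> real" where
  "Pn p zs = prod_list (map (pmf p) zs)"

lemma Pn_nonneg: "0 \<le> Pn p zs"
  unfolding Pn_def by (induction zs) auto

lemma sum_Pn: "(\<Sum>zs\<in>Ln n. Pn p zs) = (1::real)" for p :: "'a::finite pmf"
  unfolding Pn_def sum_prod_Ln by (simp add: sum_pmf_eq_1)

lemma E_Suc:
  fixes p :: "'a::finite pmf"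
  shows "(\<Sum>zs\<in>Ln (Suc n). Pn p zs * F zs) = (\<Sum>z\<in>UNIV. pmf p z * (\<Sum>zs\<in>Ln n. Pn p zs * F (z#zs)))"
  by (simp add: sum_Ln_Suc Pn_def sum_distrib_left mult.assoc)

lemma E_sum0:
  fixes p :: "'a::finite pmf" and k :: "'a \<Rightarrow> real"
  assumes "(\<Sum>z\<in>UNIV. pmf p z * k z) = 0"
  shows "(\<Sum>zs\<in>Ln n. Pn p zs * sum_list (map k zs)) = 0"
proof (induction n)
  case 0 then show ?case by (simp add: Ln_0)
next
  case (Suc n)
  have "(\<Sum>zs\<in>Ln (Suc n). Pn p zs * sum_list (map k zs))
     = (\<Sum>z\<in>UNIV. pmf p z * ((\<Sum>zs\<in>Ln n. Pn p zs * k z) + (\<Sum>zs\<in>Ln n. Pn p zs * sum_list (map k zs))))"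
    unfolding E_Suc by (simp add: distrib_left sum.distrib)
  also have "\<dots> = (\<Sum>z\<in>UNIV. pmf p z * k z)"
    using Suc by (simp add: sum_distrib_right[symmetric] sum_Pn)
  finally show ?case using assms by simp
qed

lemma E_sq:
  fixes p :: "'a::finite pmf" and k :: "'a \<Rightarrow> real"
  assumes "(\<Sum>z\<in>UNIV. pmf p z * k z) = 0"
  shows "(\<Sum>zs\<in>Ln n. Pn p zs * (sum_list (map k zs))^2) = real n * (\<Sum>z\<in>UNIV. pmf p z * (k z)^2)"
proof (induction n)
  case 0 then show ?case by (simp add: Ln_0)
next
  case (Suc n)
  let ?V = "\<Sum>z\<in>UNIV. pmf p z * (k z)^2"
  have "(\<Sum>zs\<in>Ln (Suc n). Pn p zs * (sum_list (map k zs))^2)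
     = (\<Sum>z\<in>UNIV. pmf p z * ((\<Sum>zs\<in>Ln n. Pn p zs * (k z)^2) + 2 * k z * (\<Sum>zs\<in>Ln n. Pn p zs * sum_list (map k zs))
         + (\<Sum>zs\<in>Ln n. Pn p zs * (sum_list (map k zs))^2)))"
    unfolding E_Suc
    by (simp add: power2_sum distrib_left sum.distrib sum_distrib_left algebra_simps)
  also have "\<dots> = (\<Sum>z\<in>UNIV. pmf p z * ((k z)^2 + real n * ?V))"
    using Suc E_sum0[OF assms, of n] by (simp add: sum_distrib_right[symmetric] sum_Pn)
  also have "\<dots> = ?V + real n * ?V"
    by (simp add: distrib_left sum.distrib sum_distrib_right[symmetric] sum_pmf_eq_1)
  finally show ?case by (simp add: algebra_simps)
qed

lemma chebyshev_Ln:
  fixes p :: "'a::finite pmf" and h :: "'a \<Rightarrow> real"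
  assumes n: "n > 0" and d: "\<delta> > 0"
  defines "\<mu> \<equiv> (\<Sum>z\<in>UNIV. pmf p z * h z)"
  shows "(\<Sum>zs\<in>{zs\<in>Ln n. real n * \<delta> \<le> \<bar>sum_list (map h zs) - real n * \<mu>\<bar>}. Pn p zs)
          \<le> (\<Sum>z\<in>UNIV. pmf p z * (h z - \<mu>)^2) / (real n * \<delta>^2)"
proof -
  define k where "k z = h z - \<mu>" for z
  have k0: "(\<Sum>z\<in>UNIV. pmf p z * k z) = 0"
    by (simp add: k_def right_diff_distrib sum_subtractf \<mu>_def sum_distrib_right[symmetric] sum_pmf_eq_1)
  have sk: "sum_list (map k zs) = sum_list (map h zs) - real (length zs) * \<mu>" for zs
    by (induction zs) (auto simp: k_def algebra_simps)
  let ?S = "{zs\<in>Ln n. real n * \<delta> \<le> \<bar>sum_list (map h zs) - real n * \<mu>\<bar>}"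
  have "(\<Sum>zs\<in>?S. Pn p zs) * (real n * \<delta>)^2 = (\<Sum>zs\<in>?S. Pn p zs * (real n * \<delta>)^2)"
    by (simp add: sum_distrib_right)
  also have "\<dots> \<le> (\<Sum>zs\<in>?S. Pn p zs * (sum_list (map k zs))^2)"
  proof (rule sum_mono)
    fix zs assume "zs \<in> ?S"
    then have "real n * \<delta> \<le> \<bar>sum_list (map k zs)\<bar>" by (simp add: sk Ln_def)
    then have "(real n * \<delta>)^2 \<le> (sum_list (map k zs))^2"
      using n d by (metis abs_ge_zero abs_of_nonneg power2_abs power_mono zero_le_mult_iff of_nat_0_le_iff less_imp_le)
    then show "Pn p zs * (real n * \<delta>)^2 \<le> Pn p zs * (sum_list (map k zs))^2"
      by (simp add: mult_left_mono Pn_nonneg)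
  qed
  also have "\<dots> \<le> (\<Sum>zs\<in>Ln n. Pn p zs * (sum_list (map k zs))^2)"
    by (rule sum_mono2[OF finite_Ln]) (auto simp: Pn_nonneg)
  also have "\<dots> = real n * (\<Sum>z\<in>UNIV. pmf p z * (h z - \<mu>)^2)"
    using E_sq[OF k0, of n] by (simp add: k_def[abs_def])
  finally have "(\<Sum>zs\<in>?S. Pn p zs) * (real n * \<delta>)^2 \<le> real n * (\<Sum>z\<in>UNIV. pmf p z * (h z - \<mu>)^2)" .
  then show ?thesis using n d
    by (simp add: pos_le_divide_eq power2_eq_square field_simps)
qed



definition fX :: "('x \<times> 'y) pmf \<Rightarrow> 'x \<times> 'y \<Rightarrow> real" where
  "fX P z = (if pmf P z = 0 then 0 else - log 2 (pmf P z / marg_Y P (snd z)))"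
definition gY :: "('x \<times> 'y) pmf \<Rightarrow> 'x \<times> 'y \<Rightarrow> real" where
  "gY P z = (if pmf P z = 0 then 0 else - log 2 (pmf P z / marg_X P (fst z)))"

lemma H1_eq: "cond_entropy_XY P = (\<Sum>z\<in>UNIV. pmf P z * fX P z)"
  unfolding cond_entropy_XY_def fX_def UNIV_Times_UNIV[symmetric] sum.cartesian_product
  by (intro sum.cong) auto

lemma H2_eq: "cond_entropy_YX P = (\<Sum>z\<in>UNIV. pmf P z * gY P z)"
  unfolding cond_entropy_YX_def gY_def UNIV_Times_UNIV[symmetric] sum.cartesian_product
  by (intro sum.cong) auto

lemma marg_Y_ge: "pmf P (a,b) \<le> marg_Y P b" for P :: "('x::finite \<times> 'y::finite) pmf"
  unfolding marg_Y_def by (rule member_le_sum) auto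

lemma marg_X_ge: "pmf P (a,b) \<le> marg_X P a" for P :: "('x::finite \<times> 'y::finite) pmf"
  unfolding marg_X_def by (rule member_le_sum) auto

lemma marg_X_nonneg: "0 \<le> marg_X P a" unfolding marg_X_def by (simp add: sum_nonneg)
lemma marg_Y_nonneg: "0 \<le> marg_Y P a" unfolding marg_Y_def by (simp add: sum_nonneg)

lemma sum_marg_X: "(\<Sum>a\<in>UNIV. marg_X P a) = 1" for P :: "('x::finite \<times> 'y::finite) pmf"
proof -
  have "sum (pmf P) (UNIV \<times> UNIV) = 1" using sum_pmf_eq_1[of "UNIV" P] by simp
  then show ?thesis unfolding marg_X_def by (simp add: sum.cartesian_product)
qed

lemma sum_marg_Y: "(\<Sum>b\<in>UNIV. marg_Y P b) = 1" for P :: "('x::finite \<times> 'y::finite) pmf"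
proof -
  have "sum (pmf P) (UNIV \<times> UNIV) = 1" using sum_pmf_eq_1[of "UNIV" P] by simp
  then show ?thesis unfolding marg_Y_def by (subst sum.swap) (simp add: sum.cartesian_product)
qed

lemma prod_ratio_Y:
  fixes P :: "('x::finite \<times> 'y::finite) pmf"
  assumes "\<forall>z\<in>set zs. pmf P z > 0"
  shows "prod_list (map (\<lambda>z. pmf P z / marg_Y P (snd z)) zs) = 2 powr (- sum_list (map (fX P) zs))"
  using assms
proof (induction zs)
  case Nil then show ?case by simp
next
  case (Cons z zs)
  obtain a b where z: "z = (a,b)" by (cases z)
  have p: "pmf P z > 0" using Cons by auto
  have m: "marg_Y P b > 0" using p marg_Y_ge[of P a b] z by simp
  have h: "2 powr (- fX P z) = pmf P z / marg_Y P (snd z)"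
    using p m z by (simp add: fX_def)
  have "prod_list (map (\<lambda>z. pmf P z / marg_Y P (snd z)) (z#zs)) = 2 powr (- fX P z) * 2 powr (- sum_list (map (fX P) zs))"
    using Cons h by simp
  also have "\<dots> = 2 powr (- sum_list (map (fX P) (z#zs)))"
    by (simp add: powr_add[symmetric])
  finally show ?case .
qed

lemma prod_ratio_X:
  fixes P :: "('x::finite \<times> 'y::finite) pmf"
  assumes "\<forall>z\<in>set zs. pmf P z > 0"
  shows "prod_list (map (\<lambda>z. pmf P z / marg_X P (fst z)) zs) = 2 powr (- sum_list (map (gY P) zs))"
  using assms
proof (induction zs)
  case Nil then show ?case by simp
next
  case (Cons z zs)
  obtain a b where z: "z = (a,b)" by (cases z)
  have p: "pmf P z > 0" using Cons by auto
  have m: "marg_X P a > 0" using p marg_X_ge[of P a b] z by simp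
  have h: "2 powr (- gY P z) = pmf P z / marg_X P (fst z)"
    using p m z by (simp add: gY_def)
  have "prod_list (map (\<lambda>z. pmf P z / marg_X P (fst z)) (z#zs)) = 2 powr (- gY P z) * 2 powr (- sum_list (map (gY P) zs))"
    using Cons h by simp
  also have "\<dots> = 2 powr (- sum_list (map (gY P) (z#zs)))"
    by (simp add: powr_add[symmetric])
  finally show ?case .
qed

lemma Pn_split_X:
  fixes P :: "('x::finite \<times> 'y::finite) pmf"
  assumes "\<forall>z\<in>set zs. pmf P z > 0"
  shows "Pn P zs = prod_list (map (marg_X P) (map fst zs)) * prod_list (map (\<lambda>z. pmf P z / marg_X P (fst z)) zs)"
  using assms
proof (induction zs)
  case Nil then show ?case by (simp add: Pn_def)
next
  case (Cons z zs)
  obtain a b where z: "z = (a,b)" by (cases z)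
  have p: "pmf P z > 0" using Cons by auto
  have m: "marg_X P a > 0" using p marg_X_ge[of P a b] z by simp
  show ?case using Cons m z by (simp add: Pn_def)
qed

lemma Pn_split_Y:
  fixes P :: "('x::finite \<times> 'y::finite) pmf"
  assumes "\<forall>z\<in>set zs. pmf P z > 0"
  shows "Pn P zs = prod_list (map (marg_Y P) (map snd zs)) * prod_list (map (\<lambda>z. pmf P z / marg_Y P (snd z)) zs)"
  using assms
proof (induction zs)
  case Nil then show ?case by (simp add: Pn_def)
next
  case (Cons z zs)
  obtain a b where z: "z = (a,b)" by (cases z)
  have p: "pmf P z > 0" using Cons by auto
  have m: "marg_Y P b > 0" using p marg_Y_ge[of P a b] z by simp
  show ?case using Cons m z by (simp add: Pn_def)
qed

lemma Pn_zero: "\<exists>z\<in>set zs. pmf P z = 0 \<Longrightarrow> Pn P zs = 0"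
  unfolding Pn_def by (induction zs) auto

definition Good :: "('x::finite \<times> 'y::finite) pmf \<Rightarrow> nat \<Rightarrow> real \<Rightarrow> ('x \<times> 'y) list set" where
  "Good P n \<delta> = {zs\<in>Ln n. (\<forall>z\<in>set zs. pmf P z > 0)
      \<and> \<bar>sum_list (map (fX P) zs) - real n * cond_entropy_XY P\<bar> < real n * \<delta>
      \<and> \<bar>sum_list (map (gY P) zs) - real n * cond_entropy_YX P\<bar> < real n * \<delta>}"

definition VV :: "('x::finite \<times> 'y::finite) pmf \<Rightarrow> real" where
  "VV P = (\<Sum>z\<in>UNIV. pmf P z * (fX P z - cond_entropy_XY P)^2) + (\<Sum>z\<in>UNIV. pmf P z * (gY P z - cond_entropy_YX P)^2)"

lemma bad_bound:
  fixes P :: "('x::finite \<times> 'y::finite) pmf"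
  assumes n: "n > 0" and d: "\<delta> > 0"
  shows "(\<Sum>zs\<in>Ln n - Good P n \<delta>. Pn P zs) \<le> VV P / (real n * \<delta>^2)"
proof -
  let ?S1 = "{zs\<in>Ln n. real n * \<delta> \<le> \<bar>sum_list (map (fX P) zs) - real n * cond_entropy_XY P\<bar>}"
  let ?S2 = "{zs\<in>Ln n. real n * \<delta> \<le> \<bar>sum_list (map (gY P) zs) - real n * cond_entropy_YX P\<bar>}"
  have fin: "finite (Ln n :: ('x \<times> 'y) list set)" by (rule finite_Ln)
  have "(\<Sum>zs\<in>Ln n - Good P n \<delta>. Pn P zs)
      \<le> (\<Sum>zs\<in>Ln n - Good P n \<delta>. (if zs \<in> ?S1 then Pn P zs else 0) + (if zs \<in> ?S2 then Pn P zs else 0))"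
  proof (rule sum_mono)
    fix zs assume zs: "zs \<in> Ln n - Good P n \<delta>"
    show "Pn P zs \<le> (if zs \<in> ?S1 then Pn P zs else 0) + (if zs \<in> ?S2 then Pn P zs else 0)"
    proof (cases "\<forall>z\<in>set zs. pmf P z > 0")
      case True
      then have "zs \<in> ?S1 \<or> zs \<in> ?S2" using zs by (auto simp: Good_def not_less)
      then show ?thesis by (auto simp: Pn_nonneg)
    next
      case False
      then have "\<exists>z\<in>set zs. pmf P z = 0" using pmf_nonneg[of P] by (metis less_eq_real_def)
      then show ?thesis by (simp add: Pn_zero Pn_nonneg)
    qed
  qed
  also have "\<dots> \<le> (\<Sum>zs\<in>Ln n. (if zs \<in> ?S1 then Pn P zs else 0) + (if zs \<in> ?S2 then Pn P zs else 0))"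
    by (rule sum_mono2[OF fin]) (auto simp: Pn_nonneg)
  also have "\<dots> = (\<Sum>zs\<in>?S1. Pn P zs) + (\<Sum>zs\<in>?S2. Pn P zs)"
    by (simp add: sum.distrib sum.inter_filter[OF fin, symmetric])
  also have "\<dots> \<le> (\<Sum>z\<in>UNIV. pmf P z * (fX P z - cond_entropy_XY P)^2) / (real n * \<delta>^2)
             + (\<Sum>z\<in>UNIV. pmf P z * (gY P z - cond_entropy_YX P)^2) / (real n * \<delta>^2)"
    using chebyshev_Ln[OF n d, of P "fX P"] chebyshev_Ln[OF n d, of P "gY P"]
    by (simp add: H1_eq[symmetric] H2_eq[symmetric])
  finally show ?thesis by (simp add: VV_def add_divide_distrib)
qed



lemma transcript_rect:
  "transcript T a b = transcript T a' b' \<Longrightarrow> transcript T a b' = transcript T a b"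
  by (induction T) auto

lemma transcript_len: "length (transcript T a b) \<le> depth T"
  by (induction T) auto

lemma card_short_lists: "card {bs::bool list. length bs \<le> d} \<le> 2^(d+1)"
proof -
  have eq: "{bs::bool list. length bs \<le> d} = (\<Union>k\<in>{..d}. Ln k)" by (auto simp: Ln_def)
  have c: "card (Ln k :: bool list set) = 2^k" for k
    using card_lists_length_eq[of "UNIV::bool set" k] by (simp add: Ln_def)
  have g: "(\<Sum>k\<le>d. (2::nat)^k) < 2^(Suc d)" by (induction d) auto
  have "card {bs::bool list. length bs \<le> d} \<le> (\<Sum>k\<le>d. card (Ln k :: bool list set))"
    unfolding eq by (rule card_UN_le) simp
  also have "\<dots> = (\<Sum>k\<le>d. 2^k)" by (simp add: c)
  finally show ?thesis using g by simp
qed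

lemma zip_eq_of_maps: "map fst zs = map fst zs' \<Longrightarrow> map snd zs = map snd zs' \<Longrightarrow> zs = zs'"
  by (metis zip_map_fst_snd)

definition PXn :: "('x \<times> 'y) pmf \<Rightarrow> 'x list \<Rightarrow> real" where
  "PXn P xs = prod_list (map (marg_X P) xs)"
definition PYn :: "('x \<times> 'y) pmf \<Rightarrow> 'y list \<Rightarrow> real" where
  "PYn P ys = prod_list (map (marg_Y P) ys)"

lemma PXn_nonneg: "0 \<le> PXn P xs" unfolding PXn_def by (induction xs) (auto simp: marg_X_nonneg)
lemma PYn_nonneg: "0 \<le> PYn P ys" unfolding PYn_def by (induction ys) (auto simp: marg_Y_nonneg)

lemma sum_PXn: "(\<Sum>xs\<in>Ln n. PXn P xs) = 1" for P :: "('x::finite \<times> 'y::finite) pmf"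
  unfolding PXn_def sum_prod_Ln sum_marg_X by simp
lemma sum_PYn: "(\<Sum>ys\<in>Ln n. PYn P ys) = 1" for P :: "('x::finite \<times> 'y::finite) pmf"
  unfolding PYn_def sum_prod_Ln sum_marg_Y by simp

lemma Good_Pn_X:
  fixes P :: "('x::finite \<times> 'y::finite) pmf"
  assumes "zs \<in> Good P n \<delta>"
  shows "Pn P zs \<le> 2 powr (- (real n * (cond_entropy_YX P - \<delta>))) * PXn P (map fst zs)"
proof -
  have pos: "\<forall>z\<in>set zs. pmf P z > 0" and b: "\<bar>sum_list (map (gY P) zs) - real n * cond_entropy_YX P\<bar> < real n * \<delta>"
    using assms by (auto simp: Good_def)
  have "Pn P zs = PXn P (map fst zs) * 2 powr (- sum_list (map (gY P) zs))"
    using Pn_split_X[OF pos] prod_ratio_X[OF pos] by (simp add: PXn_def)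
  also have "\<dots> \<le> PXn P (map fst zs) * 2 powr (- (real n * (cond_entropy_YX P - \<delta>)))"
    by (rule mult_left_mono[OF _ PXn_nonneg], rule powr_mono) (use b in \<open>auto simp: algebra_simps\<close>)
  finally show ?thesis by (simp add: mult.commute)
qed

lemma Good_Pn_Y:
  fixes P :: "('x::finite \<times> 'y::finite) pmf"
  assumes "zs \<in> Good P n \<delta>"
  shows "Pn P zs \<le> 2 powr (- (real n * (cond_entropy_XY P - \<delta>))) * PYn P (map snd zs)"
proof -
  have pos: "\<forall>z\<in>set zs. pmf P z > 0" and b: "\<bar>sum_list (map (fX P) zs) - real n * cond_entropy_XY P\<bar> < real n * \<delta>"
    using assms by (auto simp: Good_def)
  have "Pn P zs = PYn P (map snd zs) * 2 powr (- sum_list (map (fX P) zs))"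
    using Pn_split_Y[OF pos] prod_ratio_Y[OF pos] by (simp add: PYn_def)
  also have "\<dots> \<le> PYn P (map snd zs) * 2 powr (- (real n * (cond_entropy_XY P - \<delta>)))"
    by (rule mult_left_mono[OF _ PYn_nonneg], rule powr_mono) (use b in \<open>auto simp: algebra_simps\<close>)
  finally show ?thesis by (simp add: mult.commute)
qed



lemma converse_det:
  fixes P :: "('x::finite \<times> 'y::finite) pmf" and tr :: "'x list \<Rightarrow> 'y list \<Rightarrow> bool list"
    and d1 :: "'x list \<Rightarrow> bool list \<Rightarrow> 'y list" and d2 :: "'y list \<Rightarrow> bool list \<Rightarrow> 'x list" and n :: nat and \<delta> :: real
  assumes rect: "\<And>a b a' b'. tr a b = tr a' b' \<Longrightarrow> tr a b' = tr a b"
    and len: "\<And>a b. length (tr a b) \<le> d"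
  defines "W \<equiv> {zs \<in> Good P n \<delta>. d1 (map fst zs) (tr (map fst zs) (map snd zs)) = map snd zs
                  \<and> d2 (map snd zs) (tr (map fst zs) (map snd zs)) = map fst zs}"
  shows "(\<Sum>zs\<in>W. Pn P zs) \<le> sqrt (2^(d+1) * 2 powr (- (real n * (cond_entropy_XY P + cond_entropy_YX P - 2*\<delta>))))"
proof -
  define c1 where "c1 = 2 powr (- (real n * (cond_entropy_XY P - \<delta>)))"
  define c2 where "c2 = 2 powr (- (real n * (cond_entropy_YX P - \<delta>)))"
  have c12: "c1 * c2 = 2 powr (- (real n * (cond_entropy_XY P + cond_entropy_YX P - 2*\<delta>)))"
    unfolding c1_def c2_def by (simp add: powr_add[symmetric] algebra_simps)
  have c1p: "c1 \<ge> 0" "c2 \<ge> 0" unfolding c1_def c2_def by auto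
  define tz where "tz zs = tr (map fst zs) (map snd zs)" for zs
  have WG: "W \<subseteq> Good P n \<delta>" unfolding W_def by auto
  have GL: "Good P n \<delta> \<subseteq> Ln n" unfolding Good_def by auto
  have finW: "finite W" using WG GL finite_subset[OF _ finite_Ln] by blast
  define Tr where "Tr = tz ` W"
  define Wt where "Wt \<tau> = {zs\<in>W. tz zs = \<tau>}" for \<tau>
  define s where "s \<tau> = (\<Sum>zs\<in>Wt \<tau>. Pn P zs)" for \<tau>
  define \<alpha> where "\<alpha> \<tau> = c2 * (\<Sum>xs\<in>map fst ` Wt \<tau>. PXn P xs)" for \<tau>
  define \<beta> where "\<beta> \<tau> = c1 * (\<Sum>ys\<in>map snd ` Wt \<tau>. PYn P ys)" for \<tau>
  have finWt: "finite (Wt \<tau>)" for \<tau> unfolding Wt_def using finW by auto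
  have injX: "inj_on (map fst) (Wt \<tau>)" for \<tau>
  proof (rule inj_onI)
    fix zs zs' assume a: "zs \<in> Wt \<tau>" "zs' \<in> Wt \<tau>" "map fst zs = map fst zs'"
    have "d1 (map fst zs) \<tau> = map snd zs" "d1 (map fst zs') \<tau> = map snd zs'"
      using a(1,2) by (auto simp: Wt_def W_def tz_def)
    then have "map snd zs = map snd zs'" using a(3) by simp
    then show "zs = zs'" using a(3) zip_eq_of_maps by blast
  qed
  have injY: "inj_on (map snd) (Wt \<tau>)" for \<tau>
  proof (rule inj_onI)
    fix zs zs' assume a: "zs \<in> Wt \<tau>" "zs' \<in> Wt \<tau>" "map snd zs = map snd zs'"
    have "d2 (map snd zs) \<tau> = map fst zs" "d2 (map snd zs') \<tau> = map fst zs'"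
      using a(1,2) by (auto simp: Wt_def W_def tz_def)
    then have "map fst zs = map fst zs'" using a(3) by simp
    then show "zs = zs'" using a(3) zip_eq_of_maps by blast
  qed
  have sa: "s \<tau> \<le> \<alpha> \<tau>" for \<tau>
  proof -
    have "s \<tau> \<le> (\<Sum>zs\<in>Wt \<tau>. c2 * PXn P (map fst zs))"
      unfolding s_def c2_def
      by (rule sum_mono, rule Good_Pn_X) (use WG in \<open>auto simp: Wt_def\<close>)
    also have "\<dots> = \<alpha> \<tau>" unfolding \<alpha>_def sum_distrib_left sum.reindex[OF injX] by simp
    finally show ?thesis .
  qed
  have sb: "s \<tau> \<le> \<beta> \<tau>" for \<tau>
  proof -
    have "s \<tau> \<le> (\<Sum>zs\<in>Wt \<tau>. c1 * PYn P (map snd zs))"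
      unfolding s_def c1_def
      by (rule sum_mono, rule Good_Pn_Y) (use WG in \<open>auto simp: Wt_def\<close>)
    also have "\<dots> = \<beta> \<tau>" unfolding \<beta>_def sum_distrib_left sum.reindex[OF injY] by simp
    finally show ?thesis .
  qed
  have s0: "s \<tau> \<ge> 0" for \<tau> unfolding s_def by (simp add: sum_nonneg Pn_nonneg)
  have ssq: "(s \<tau>)^2 \<le> \<alpha> \<tau> * \<beta> \<tau>" for \<tau>
    using mult_mono[OF sa sb order_trans[OF s0 sa] s0] by (simp add: power2_eq_square)
  have sumW: "(\<Sum>zs\<in>W. Pn P zs) = (\<Sum>\<tau>\<in>Tr. s \<tau>)"
    unfolding Tr_def s_def Wt_def using sum.image_gen[OF finW, of "Pn P" tz] by simp
  have finTr: "finite Tr" unfolding Tr_def using finW by simp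
  have cardTr: "real (card Tr) \<le> 2^(d+1)"
  proof -
    have "Tr \<subseteq> {bs::bool list. length bs \<le> d}" unfolding Tr_def tz_def using len by auto
    moreover have fin: "finite {bs::bool list. length bs \<le> d}"
      using finite_lists_length_le[of "UNIV::bool set" d] by simp
    ultimately have "card Tr \<le> card {bs::bool list. length bs \<le> d}"
      using card_mono by blast
    then have "card Tr \<le> 2^(d+1)" using card_short_lists[of d] by linarith
    then have "real (card Tr) \<le> real (2^(d+1))" by (rule of_nat_mono)
    then show ?thesis by simp
  qed
  define F where "F p = PXn P (fst p) * PYn P (snd p)" for p :: "'x list \<times> 'y list"
  have F0: "F p \<ge> 0" for p unfolding F_def by (simp add: PXn_nonneg PYn_nonneg)
  have finLL: "finite (Ln n \<times> Ln n :: ('x list \<times> 'y list) set)" by (simp add: finite_Ln)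
  have ab: "\<alpha> \<tau> * \<beta> \<tau> \<le> c1 * c2 * (\<Sum>p\<in>Ln n \<times> Ln n. if tr (fst p) (snd p) = \<tau> then F p else 0)" for \<tau>
  proof -
    have AL: "map fst ` Wt \<tau> \<subseteq> Ln n" "map snd ` Wt \<tau> \<subseteq> Ln n"
      using WG GL by (auto simp: Wt_def Ln_def)
    have "(\<Sum>xs\<in>map fst ` Wt \<tau>. PXn P xs) * (\<Sum>ys\<in>map snd ` Wt \<tau>. PYn P ys)
        = (\<Sum>p\<in>map fst ` Wt \<tau> \<times> map snd ` Wt \<tau>. F p)"
      unfolding F_def sum_product sum.cartesian_product by (simp add: case_prod_unfold)
    also have "\<dots> = (\<Sum>p\<in>map fst ` Wt \<tau> \<times> map snd ` Wt \<tau>. if tr (fst p) (snd p) = \<tau> then F p else 0)"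
    proof (rule sum.cong[OF refl])
      fix p assume "p \<in> map fst ` Wt \<tau> \<times> map snd ` Wt \<tau>"
      then obtain z1 z2 where z: "z1 \<in> Wt \<tau>" "z2 \<in> Wt \<tau>" "p = (map fst z1, map snd z2)" by auto
      then have "tr (map fst z1) (map snd z1) = \<tau>" "tr (map fst z2) (map snd z2) = \<tau>"
        by (auto simp: Wt_def tz_def)
      then have "tr (map fst z1) (map snd z2) = \<tau>" using rect[of "map fst z1" "map snd z1" "map fst z2" "map snd z2"] by simp
      then show "F p = (if tr (fst p) (snd p) = \<tau> then F p else 0)" using z by simp
    qed
    also have "\<dots> \<le> (\<Sum>p\<in>Ln n \<times> Ln n. if tr (fst p) (snd p) = \<tau> then F p else 0)"
      by (rule sum_mono2[OF finLL]) (use AL F0 in auto)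
    finally have XY: "(\<Sum>xs\<in>map fst ` Wt \<tau>. PXn P xs) * (\<Sum>ys\<in>map snd ` Wt \<tau>. PYn P ys)
        \<le> (\<Sum>p\<in>Ln n \<times> Ln n. if tr (fst p) (snd p) = \<tau> then F p else 0)" .
    have cc: "0 \<le> c1 * c2" using c1p by simp
    have "\<alpha> \<tau> * \<beta> \<tau> = (c1 * c2) * ((\<Sum>xs\<in>map fst ` Wt \<tau>. PXn P xs) * (\<Sum>ys\<in>map snd ` Wt \<tau>. PYn P ys))"
      unfolding \<alpha>_def \<beta>_def by (simp only: mult_ac)
    also have "\<dots> \<le> c1 * c2 * (\<Sum>p\<in>Ln n \<times> Ln n. if tr (fst p) (snd p) = \<tau> then F p else 0)"
      by (rule mult_left_mono[OF XY cc])
    finally show ?thesis .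
  qed
  have ab1: "(\<Sum>\<tau>\<in>Tr. \<alpha> \<tau> * \<beta> \<tau>) \<le> c1 * c2 * (\<Sum>\<tau>\<in>Tr. \<Sum>p\<in>Ln n \<times> Ln n. if tr (fst p) (snd p) = \<tau> then F p else 0)"
    by (subst sum_distrib_left) (rule sum_mono[OF ab])
  have "(\<Sum>\<tau>\<in>Tr. \<Sum>p\<in>Ln n \<times> Ln n. if tr (fst p) (snd p) = \<tau> then F p else 0)
       = (\<Sum>p\<in>Ln n \<times> Ln n. if tr (fst p) (snd p) \<in> Tr then F p else 0)"
    by (subst sum.swap) (simp add: finTr)
  also have "\<dots> \<le> (\<Sum>p\<in>Ln n \<times> Ln n. F p)"
    by (rule sum_mono) (simp add: F0)
  also have "(\<Sum>p\<in>Ln n \<times> Ln n. F p) = 1"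
  proof -
    have "(\<Sum>p\<in>Ln n \<times> Ln n. F p) = (\<Sum>xs\<in>Ln n. PXn P xs) * (\<Sum>ys\<in>Ln n. PYn P ys)"
      unfolding F_def sum_product sum.cartesian_product by (simp add: case_prod_unfold)
    then show ?thesis by (simp add: sum_PXn sum_PYn)
  qed
  finally have "(\<Sum>\<tau>\<in>Tr. \<Sum>p\<in>Ln n \<times> Ln n. if tr (fst p) (snd p) = \<tau> then F p else 0) \<le> 1" .
  then have abs: "(\<Sum>\<tau>\<in>Tr. \<alpha> \<tau> * \<beta> \<tau>) \<le> c1 * c2"
    using ab1 mult_left_mono[of _ 1 "c1*c2"] c1p by (smt (verit) mult_nonneg_nonneg)
  have "(\<Sum>zs\<in>W. Pn P zs)^2 \<le> (\<Sum>\<tau>\<in>Tr. (s \<tau>)^2) * card Tr"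
    unfolding sumW by (rule sum_squared_le_sum_of_squares)
  also have "\<dots> \<le> (c1 * c2) * 2^(d+1)"
  proof (rule mult_mono)
    show "(\<Sum>\<tau>\<in>Tr. (s \<tau>)^2) \<le> c1 * c2" using abs sum_mono[of Tr "\<lambda>\<tau>. (s \<tau>)^2", OF ssq] by linarith
  qed (use cardTr c1p in auto)
  finally show ?thesis using c12 by (intro real_le_rsqrt) (simp add: mult.commute)
qed



lemma measure_bind_le:
  assumes "\<And>x. x \<in> set_pmf M \<Longrightarrow> measure_pmf.prob (f x) A \<le> c" "0 \<le> c"
  shows "measure_pmf.prob (bind_pmf M f) A \<le> c"
proof -
  have "emeasure (measure_pmf (bind_pmf M f)) A = (\<integral>\<^sup>+x. emeasure (measure_pmf (f x)) A \<partial>measure_pmf M)" by simp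
  also have "\<dots> \<le> (\<integral>\<^sup>+x. ennreal c \<partial>measure_pmf M)"
    by (rule nn_integral_mono_AE) (auto simp: AE_measure_pmf_iff measure_pmf.emeasure_eq_measure assms ennreal_leI)
  also have "\<dots> = ennreal c" by simp
  finally show ?thesis using assms(2) by (simp add: measure_pmf.emeasure_eq_measure)
qed

lemma prob_iid:
  fixes P :: "'a::finite pmf"
  shows "measure_pmf.prob (iid_pmf n P) A = (\<Sum>zs\<in>A \<inter> Ln n. Pn P zs)"
proof -
  have "measure_pmf.prob (iid_pmf n P) A = measure_pmf.prob (iid_pmf n P) (A \<inter> Ln n)"
    by (rule measure_prob_cong_0) (auto simp: pmf_iid Ln_def)
  also have "\<dots> = (\<Sum>zs\<in>A \<inter> Ln n. pmf (iid_pmf n P) zs)"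
    by (rule measure_measure_pmf_finite) (simp add: finite_Ln)
  also have "\<dots> = (\<Sum>zs\<in>A \<inter> Ln n. Pn P zs)"
    by (rule sum.cong) (auto simp: pmf_iid Ln_def Pn_def)
  finally show ?thesis .
qed

lemma VV_nonneg: "0 \<le> VV P"
  unfolding VV_def by (intro add_nonneg_nonneg sum_nonneg) auto

lemma success_le:
  fixes P :: "('x::finite \<times> 'y::finite) pmf"
  assumes n: "n > 0" and d: "\<delta> > 0"
  shows "success_prob P n PUX PUY PU T dec1 dec2 \<le> VV P / (real n * \<delta>^2)
     + sqrt (2^(depth T+1) * 2 powr (- (real n * (cond_entropy_XY P + cond_entropy_YX P - 2*\<delta>))))"
    (is "_ \<le> ?B")
proof -
  let ?I = "iid_pmf n P"
  let ?S = "{(xys, ux, uy, u).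
          let xs = map fst xys; ys = map snd xys;
              tr = transcript T (xs, ux, u) (ys, uy, u)
          in dec1 xs tr ux u = ys \<and> dec2 ys tr uy u = xs}"
  have eq: "(do { xys \<leftarrow> ?I; ux \<leftarrow> PUX; uy \<leftarrow> PUY; u \<leftarrow> PU; return_pmf (xys, ux, uy, u) })
      = (do { ux \<leftarrow> PUX; uy \<leftarrow> PUY; u \<leftarrow> PU; xys \<leftarrow> ?I; return_pmf (xys, ux, uy, u) })"
    by (simp only: bind_commute_pmf[of ?I])
  have B0: "0 \<le> ?B"
    by (intro add_nonneg_nonneg divide_nonneg_nonneg real_sqrt_ge_zero mult_nonneg_nonneg) (use VV_nonneg[of P] in auto)
  show ?thesis
    unfolding success_prob_def eq
  proof (rule measure_bind_le[OF _ B0], rule measure_bind_le[OF _ B0], rule measure_bind_le[OF _ B0])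
    fix ux uy u
    define tr where "tr a b = transcript T (a, ux, u) (b, uy, u)" for a b
    define d1 where "d1 a \<tau> = dec1 a \<tau> ux u" for a \<tau>
    define d2 where "d2 b \<tau> = dec2 b \<tau> uy u" for b \<tau>
    define W where "W = {zs \<in> Good P n \<delta>. d1 (map fst zs) (tr (map fst zs) (map snd zs)) = map snd zs
                  \<and> d2 (map snd zs) (tr (map fst zs) (map snd zs)) = map fst zs}"
    have conv: "(\<Sum>zs\<in>W. Pn P zs) \<le> sqrt (2^(depth T+1) * 2 powr (- (real n * (cond_entropy_XY P + cond_entropy_YX P - 2*\<delta>))))"
      unfolding W_def
    proof (rule converse_det)
      show "\<And>a b a' b'. tr a b = tr a' b' \<Longrightarrow> tr a b' = tr a b" unfolding tr_def by (rule transcript_rect)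
      show "\<And>a b. length (tr a b) \<le> depth T" unfolding tr_def by (rule transcript_len)
    qed
    have bad: "(\<Sum>zs\<in>Ln n - Good P n \<delta>. Pn P zs) \<le> VV P / (real n * \<delta>^2)"
      by (rule bad_bound[OF n d])
    let ?S' = "{xys. (xys, ux, uy, u) \<in> ?S}"
    have "measure_pmf.prob (?I \<bind> (\<lambda>xys. return_pmf (xys, ux, uy, u))) ?S
        = measure_pmf.prob (map_pmf (\<lambda>xys. (xys, ux, uy, u)) ?I) ?S"
      by (simp add: map_pmf_def)
    also have "\<dots> = (\<Sum>zs\<in>?S' \<inter> Ln n. Pn P zs)"
      by (simp add: prob_iid vimage_def)
    also have "\<dots> \<le> (\<Sum>zs\<in>(Ln n - Good P n \<delta>) \<union> W. Pn P zs)"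
    proof (rule sum_mono2)
      show "finite ((Ln n - Good P n \<delta>) \<union> W)"
        using finite_Ln[of n] by (auto simp: W_def Good_def intro: finite_subset)
      show "?S' \<inter> Ln n \<subseteq> (Ln n - Good P n \<delta>) \<union> W"
        by (auto simp: W_def tr_def d1_def d2_def Let_def)
    qed (simp add: Pn_nonneg)
    also have "\<dots> = (\<Sum>zs\<in>Ln n - Good P n \<delta>. Pn P zs) + (\<Sum>zs\<in>W. Pn P zs)"
      by (rule sum.union_disjoint) (use finite_Ln[of n] in \<open>auto simp: W_def Good_def intro: finite_subset\<close>)
    finally show "measure_pmf.prob (?I \<bind> (\<lambda>xys. return_pmf (xys, ux, uy, u))) ?S \<le> ?B"
      using bad conv by linarith
  qed
qed



lemma collision_card:
  assumes A: "finite A" and B: "finite B" "B \<noteq> {}" and x: "x \<in> A" "x' \<in> A" "x \<noteq> x'"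
  shows "card {e \<in> PiE A (\<lambda>_. B). e x' = e x} * card B = card (PiE A (\<lambda>_. B))"
proof -
  define G where "G c a = (if a = x \<or> a = x' then {c} else B)" for c a
  have eq: "{e \<in> PiE A (\<lambda>_. B). e x' = e x} = (\<Union>c\<in>B. PiE A (G c))"
  proof (intro equalityI subsetI)
    fix e assume e: "e \<in> {e \<in> PiE A (\<lambda>_. B). e x' = e x}"
    then have eP: "e \<in> PiE A (\<lambda>_. B)" and exx: "e x' = e x" by auto
    have exB: "e x \<in> B" using PiE_mem[OF eP x(1)] .
    have "e \<in> PiE A (G (e x))"
    proof (rule PiE_I)
      fix a assume "a \<in> A"
      then show "e a \<in> G (e x) a" using PiE_mem[OF eP] exx by (simp add: G_def)
    next
      fix a assume "a \<notin> A"
      then show "e a = undefined" using PiE_arb[OF eP] by simp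
    qed
    then show "e \<in> (\<Union>c\<in>B. PiE A (G c))" using exB by blast
  next
    fix e assume "e \<in> (\<Union>c\<in>B. PiE A (G c))"
    then obtain c where c: "c \<in> B" "e \<in> PiE A (G c)" by blast
    have ex: "e x = c" using PiE_mem[OF c(2) x(1)] by (simp add: G_def)
    have ex': "e x' = c" using PiE_mem[OF c(2) x(2)] by (simp add: G_def)
    have "e \<in> PiE A (\<lambda>_. B)"
    proof (rule PiE_I)
      fix a assume a: "a \<in> A"
      show "e a \<in> B"
      proof (cases "a = x \<or> a = x'")
        case True then show ?thesis using ex ex' c(1) by auto
      next
        case False then show ?thesis using PiE_mem[OF c(2) a] by (simp add: G_def)
      qed
    next
      fix a assume "a \<notin> A"
      then show "e a = undefined" using PiE_arb[OF c(2)] by simp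
    qed
    then show "e \<in> {e \<in> PiE A (\<lambda>_. B). e x' = e x}" using ex ex' by simp
  qed
  have disj: "PiE A (G c) \<inter> PiE A (G c') = {}" if "c \<noteq> c'" for c c'
  proof (rule ccontr)
    assume "PiE A (G c) \<inter> PiE A (G c') \<noteq> {}"
    then obtain e where "e \<in> PiE A (G c)" "e \<in> PiE A (G c')" by blast
    then have "e x \<in> G c x" "e x \<in> G c' x" using PiE_mem x(1) by blast+
    then show False using that by (simp add: G_def)
  qed
  have cardG: "card (PiE A (G c)) = card B ^ card (A - {x, x'})" for c
  proof -
    have "card (PiE A (G c)) = (\<Prod>a\<in>A. card (G c a))" by (rule card_PiE[OF A])
    also have "\<dots> = (\<Prod>a\<in>A - {x,x'}. card (G c a)) * (\<Prod>a\<in>{x,x'}. card (G c a))"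
      using x A by (subst prod.subset_diff[of "{x,x'}"]) auto
    also have "\<dots> = card B ^ card (A - {x, x'})"
      using x by (simp add: G_def)
    finally show ?thesis .
  qed
  have cA: "card A = card (A - {x,x'}) + 2"
  proof -
    have "card {x,x'} \<le> card A" using x A by (intro card_mono) auto
    then show ?thesis using x A by (simp add: card_Diff_subset)
  qed
  have "card {e \<in> PiE A (\<lambda>_. B). e x' = e x} = (\<Sum>c\<in>B. card (PiE A (G c)))"
    unfolding eq using B A by (intro card_UN_disjoint) (auto simp: disjoint_family_on_def disj finite_PiE G_def)
  also have "\<dots> = card B * card B ^ card (A - {x, x'})" by (simp add: cardG)
  finally have "card {e \<in> PiE A (\<lambda>_. B). e x' = e x} * card B = card B ^ card A"
    by (simp add: cA power_add)
  moreover have "card (PiE A (\<lambda>_. B)) = card B ^ card A" by (simp add: card_PiE A)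
  ultimately show ?thesis by simp
qed

lemma collision_sum:
  assumes A: "finite A" and B: "finite B" "B \<noteq> {}" and x: "x \<in> A" "x' \<in> A" "x \<noteq> x'"
  shows "(\<Sum>e\<in>PiE A (\<lambda>_. B). if e x' = e x then 1 else 0 :: real) = real (card (PiE A (\<lambda>_. B))) / real (card B)"
proof -
  have fin: "finite (PiE A (\<lambda>_. B))" using A B by (simp add: finite_PiE)
  have "(\<Sum>e\<in>PiE A (\<lambda>_. B). if e x' = e x then 1 else 0 :: real) = real (card {e \<in> PiE A (\<lambda>_. B). e x' = e x})"
    using fin by (simp add: sum.If_cases Int_def)
  also have "\<dots> = real (card (PiE A (\<lambda>_. B))) / real (card B)"
    using collision_card[OF assms] B by (simp add: field_simps flip: of_nat_mult)
  finally show ?thesis .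
qed

lemma exists_below_avg:
  fixes Err :: "'e \<Rightarrow> real"
  assumes "finite F" "F \<noteq> {}" "(\<Sum>e\<in>F. Err e) \<le> real (card F) * b"
  shows "\<exists>e\<in>F. Err e \<le> b"
proof (rule ccontr)
  assume "\<not> ?thesis"
  then have "\<forall>e\<in>F. b < Err e" by auto
  then have "(\<Sum>e\<in>F. b) < (\<Sum>e\<in>F. Err e)" using assms(1,2) by (intro sum_strict_mono) auto
  then show False using assms(3) by simp
qed



fun sendA :: "nat \<Rightarrow> nat \<Rightarrow> ('a \<Rightarrow> bool list) \<Rightarrow> ('a,'b) ptree \<Rightarrow> ('a,'b) ptree" where
  "sendA i 0 h c = c"
| "sendA i (Suc k) h c = Node1 (\<lambda>a. h a ! i) (sendA (Suc i) k h c) (sendA (Suc i) k h c)"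

fun sendB :: "nat \<Rightarrow> nat \<Rightarrow> ('b \<Rightarrow> bool list) \<Rightarrow> ('a,'b) ptree \<Rightarrow> ('a,'b) ptree" where
  "sendB i 0 h c = c"
| "sendB i (Suc k) h c = Node2 (\<lambda>b. h b ! i) (sendB (Suc i) k h c) (sendB (Suc i) k h c)"

lemma tr_same1: "transcript (Node1 f t t) a b = f a # transcript t a b" by simp
lemma tr_same2: "transcript (Node2 f t t) a b = f b # transcript t a b" by simp

lemma transcript_sendA: "transcript (sendA i k h c) a b = map (\<lambda>j. h a ! j) [i..<i+k] @ transcript c a b"
proof (induction k arbitrary: i)
  case 0 then show ?case by simp
next
  case (Suc k)
  have "[i..<i+Suc k] = i # [Suc i..<Suc i + k]" by (simp add: upt_conv_Cons)
  then show ?case using Suc by (simp only: sendA.simps tr_same1) simp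
qed

lemma transcript_sendB: "transcript (sendB i k h c) a b = map (\<lambda>j. h b ! j) [i..<i+k] @ transcript c a b"
proof (induction k arbitrary: i)
  case 0 then show ?case by simp
next
  case (Suc k)
  have "[i..<i+Suc k] = i # [Suc i..<Suc i + k]" by (simp add: upt_conv_Cons)
  then show ?case using Suc by (simp only: sendB.simps tr_same2) simp
qed

lemma depth_sendA: "depth (sendA i k h c) = k + depth c"
  by (induction k arbitrary: i) auto

lemma depth_sendB: "depth (sendB i k h c) = k + depth c"
  by (induction k arbitrary: i) auto

lemma map_nth_len: "length xs = k \<Longrightarrow> map (\<lambda>j. xs ! j) [0..<k] = xs"
  using map_nth[of xs] by simp

lemma sum_prod_zip2:
  fixes F :: "'a \<times> 'b::finite \<Rightarrow> real"
  shows "(\<Sum>ys\<in>Ln (length xs). prod_list (map F (zip xs ys))) = prod_list (map (\<lambda>a. \<Sum>b\<in>UNIV. F(a,b)) xs)"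
proof (induction xs)
  case Nil then show ?case by (simp add: Ln_0)
next
  case (Cons x xs)
  then show ?case by (simp add: sum_Ln_Suc sum_distrib_left[symmetric] sum_distrib_right[symmetric])
qed

lemma prod_list_01: "(\<forall>x\<in>set xs. 0 \<le> f x \<and> f x \<le> (1::real)) \<Longrightarrow> 0 \<le> prod_list (map f xs) \<and> prod_list (map f xs) \<le> 1"
proof (induction xs)
  case Nil then show ?case by simp
next
  case (Cons x xs)
  then have a: "0 \<le> f x" "f x \<le> 1" "0 \<le> prod_list (map f xs)" "prod_list (map f xs) \<le> 1" by auto
  have "f x * prod_list (map f xs) \<le> 1" by (rule mult_le_one[OF a(2) a(3) a(4)])
  moreover have "0 \<le> f x * prod_list (map f xs)" using a by simp
  ultimately show ?case by simp
qed

lemma prod_list_le1: "(\<forall>x\<in>set xs. 0 \<le> f x \<and> f x \<le> (1::real)) \<Longrightarrow> prod_list (map f xs) \<le> 1"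
  using prod_list_01 by blast

lemma prod_list_nonneg': "(\<forall>x\<in>set xs. 0 \<le> (f x::real)) \<Longrightarrow> 0 \<le> prod_list (map f xs) \<and> True"
  by (induction xs) auto

definition W1 :: "('x \<times> 'y) pmf \<Rightarrow> 'x list \<Rightarrow> 'y list \<Rightarrow> real" where
  "W1 P xs ys = prod_list (map (\<lambda>z. pmf P z / marg_Y P (snd z)) (zip xs ys))"
definition W2 :: "('x \<times> 'y) pmf \<Rightarrow> 'x list \<Rightarrow> 'y list \<Rightarrow> real" where
  "W2 P xs ys = prod_list (map (\<lambda>z. pmf P z / marg_X P (fst z)) (zip xs ys))"

lemma W1_nonneg: "0 \<le> W1 P xs ys"
proof -
  have "\<forall>z\<in>set (zip xs ys). 0 \<le> pmf P z / marg_Y P (snd z)" by (simp add: marg_Y_nonneg)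
  then show ?thesis unfolding W1_def using prod_list_nonneg'[of "zip xs ys" "\<lambda>z. pmf P z / marg_Y P (snd z)"] by simp
qed

lemma W2_nonneg: "0 \<le> W2 P xs ys"
proof -
  have "\<forall>z\<in>set (zip xs ys). 0 \<le> pmf P z / marg_X P (fst z)" by (simp add: marg_X_nonneg)
  then show ?thesis unfolding W2_def using prod_list_nonneg'[of "zip xs ys" "\<lambda>z. pmf P z / marg_X P (fst z)"] by simp
qed

lemma sum_W1: "(\<Sum>xs\<in>Ln (length ys). W1 P xs ys) \<le> 1" for P :: "('x::finite \<times> 'y::finite) pmf"
proof -
  have "(\<Sum>xs\<in>Ln (length ys). W1 P xs ys) = prod_list (map (\<lambda>b. \<Sum>a\<in>UNIV. pmf P (a,b) / marg_Y P b) ys)"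
    unfolding W1_def by (rule sum_prod_zip[where F = "\<lambda>z. pmf P z / marg_Y P (snd z)", simplified])
  also have "\<dots> \<le> 1"
  proof (rule prod_list_le1, intro ballI conjI)
    fix b
    have e: "(\<Sum>a\<in>UNIV. pmf P (a,b) / marg_Y P b) = marg_Y P b / marg_Y P b"
      by (simp only: sum_divide_distrib[symmetric] marg_Y_def)
    show "0 \<le> (\<Sum>a\<in>UNIV. pmf P (a,b) / marg_Y P b)" unfolding e by (simp add: marg_Y_nonneg)
    show "(\<Sum>a\<in>UNIV. pmf P (a,b) / marg_Y P b) \<le> 1" unfolding e by (cases "marg_Y P b = 0") simp_all
  qed
  finally show ?thesis .
qed

lemma sum_W2: "(\<Sum>ys\<in>Ln (length xs). W2 P xs ys) \<le> 1" for P :: "('x::finite \<times> 'y::finite) pmf"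
proof -
  have "(\<Sum>ys\<in>Ln (length xs). W2 P xs ys) = prod_list (map (\<lambda>a. \<Sum>b\<in>UNIV. pmf P (a,b) / marg_X P a) xs)"
    unfolding W2_def by (rule sum_prod_zip2[where F = "\<lambda>z. pmf P z / marg_X P (fst z)", simplified])
  also have "\<dots> \<le> 1"
  proof (rule prod_list_le1, intro ballI conjI)
    fix a
    have e: "(\<Sum>b\<in>UNIV. pmf P (a,b) / marg_X P a) = marg_X P a / marg_X P a"
      by (simp only: sum_divide_distrib[symmetric] marg_X_def)
    show "0 \<le> (\<Sum>b\<in>UNIV. pmf P (a,b) / marg_X P a)" unfolding e by (simp add: marg_X_nonneg)
    show "(\<Sum>b\<in>UNIV. pmf P (a,b) / marg_X P a) \<le> 1" unfolding e by (cases "marg_X P a = 0") simp_all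
  qed
  finally show ?thesis .
qed

lemma card_level_set:
  fixes W :: "'a \<Rightarrow> real"
  assumes fin: "finite S" and W0: "\<And>s. 0 \<le> W s" and sum1: "(\<Sum>s\<in>S. W s) \<le> 1" and c: "c > 0"
  shows "real (card {s\<in>S. c \<le> W s}) \<le> 1 / c"
proof -
  have "real (card {s\<in>S. c \<le> W s}) * c = (\<Sum>s\<in>{s\<in>S. c \<le> W s}. c)" by simp
  also have "\<dots> \<le> (\<Sum>s\<in>{s\<in>S. c \<le> W s}. W s)" by (rule sum_mono) auto
  also have "\<dots> \<le> (\<Sum>s\<in>S. W s)" by (rule sum_mono2[OF fin]) (auto simp: W0)
  finally show ?thesis using sum1 c by (simp add: field_simps)
qed

lemma Good_T1:
  fixes P :: "('x::finite \<times> 'y::finite) pmf"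
  assumes "zs \<in> Good P n \<delta>"
  shows "2 powr (- (real n * (cond_entropy_XY P + \<delta>))) \<le> W1 P (map fst zs) (map snd zs)"
proof -
  have pos: "\<forall>z\<in>set zs. pmf P z > 0" and b: "\<bar>sum_list (map (fX P) zs) - real n * cond_entropy_XY P\<bar> < real n * \<delta>"
    using assms by (auto simp: Good_def)
  have "W1 P (map fst zs) (map snd zs) = 2 powr (- sum_list (map (fX P) zs))"
    unfolding W1_def zip_map_fst_snd by (rule prod_ratio_Y[OF pos])
  moreover have "2 powr (- (real n * (cond_entropy_XY P + \<delta>))) \<le> 2 powr (- sum_list (map (fX P) zs))"
    by (rule powr_mono) (use b in \<open>auto simp: algebra_simps\<close>)
  ultimately show ?thesis by simp
qed

lemma Good_T2:
  fixes P :: "('x::finite \<times> 'y::finite) pmf"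
  assumes "zs \<in> Good P n \<delta>"
  shows "2 powr (- (real n * (cond_entropy_YX P + \<delta>))) \<le> W2 P (map fst zs) (map snd zs)"
proof -
  have pos: "\<forall>z\<in>set zs. pmf P z > 0" and b: "\<bar>sum_list (map (gY P) zs) - real n * cond_entropy_YX P\<bar> < real n * \<delta>"
    using assms by (auto simp: Good_def)
  have "W2 P (map fst zs) (map snd zs) = 2 powr (- sum_list (map (gY P) zs))"
    unfolding W2_def zip_map_fst_snd by (rule prod_ratio_X[OF pos])
  moreover have "2 powr (- (real n * (cond_entropy_YX P + \<delta>))) \<le> 2 powr (- sum_list (map (gY P) zs))"
    by (rule powr_mono) (use b in \<open>auto simp: algebra_simps\<close>)
  ultimately show ?thesis by simp
qed



lemma card_bool_Ln: "card (Ln k :: bool list set) = 2^k"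
  using card_lists_length_eq[of "UNIV::bool set" k] by (simp add: Ln_def)

lemma Ln_nonempty: "Ln k \<noteq> ({} :: bool list set)"
proof -
  have "replicate k True \<in> Ln k" by (simp add: Ln_def)
  then show ?thesis by blast
qed

lemma ratio_bound:
  assumes "real k \<ge> real n * (H + 2*\<delta>)"
  shows "(1 / 2 powr (- (real n * (H + \<delta>)))) / 2^k \<le> 2 powr (- (real n * \<delta>))"
proof -
  have "(1 / 2 powr (- (real n * (H + \<delta>)))) / 2^k = 2 powr (real n * (H + \<delta>) - real k)"
    by (simp add: powr_minus_divide powr_diff powr_realpow[symmetric])
  also have "\<dots> \<le> 2 powr (- (real n * \<delta>))"
    by (rule powr_mono) (use assms in \<open>auto simp: algebra_simps\<close>)
  finally show ?thesis .
qed

lemma hash_avg: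
  fixes k :: nat and Q :: "'z \<Rightarrow> real" and X :: "'z \<Rightarrow> 'a list" and TT :: "'z \<Rightarrow> 'a list set"
  assumes finZ: "finite Z" and Q0: "\<And>z. z \<in> Z \<Longrightarrow> 0 \<le> Q z" and Q1: "(\<Sum>z\<in>Z. Q z) \<le> 1"
    and XL: "\<And>z. z \<in> Z \<Longrightarrow> X z \<in> Ln n" and TL: "\<And>z. z \<in> Z \<Longrightarrow> TT z \<subseteq> Ln n"
    and card: "\<And>z. z \<in> Z \<Longrightarrow> real (card (TT z)) \<le> M"
    and fin: "finite (Ln n :: 'a list set)" and M0: "0 \<le> M"
  defines "FF \<equiv> PiE (Ln n) (\<lambda>_. Ln k :: bool list set)"
  shows "(\<Sum>e\<in>FF. \<Sum>z\<in>Z. Q z * (\<Sum>x'\<in>TT z - {X z}. if e x' = e (X z) then 1 else 0))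
          \<le> real (card FF) * (M / 2^k)"
proof -
  have finB: "finite (Ln k :: bool list set)" by (rule finite_Ln)
  have finFF: "finite FF" unfolding FF_def using fin finB by (simp add: finite_PiE)
  have "(\<Sum>e\<in>FF. \<Sum>z\<in>Z. Q z * (\<Sum>x'\<in>TT z - {X z}. if e x' = e (X z) then 1 else 0))
      = (\<Sum>z\<in>Z. Q z * (\<Sum>x'\<in>TT z - {X z}. \<Sum>e\<in>FF. if e x' = e (X z) then 1 else 0))"
    by (subst sum.swap) (simp add: sum_distrib_left sum.swap[of _ FF])
  also have "\<dots> = (\<Sum>z\<in>Z. Q z * (real (card (TT z - {X z})) * (real (card FF) / 2^k)))"
  proof (rule sum.cong[OF refl])
    fix z assume z: "z \<in> Z"
    have "(\<Sum>e\<in>FF. if e x' = e (X z) then 1 else 0) = real (card FF) / 2^k" if x': "x' \<in> TT z - {X z}" for x'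
      unfolding FF_def
      using collision_sum[OF fin finB Ln_nonempty XL[OF z], of x'] x' TL[OF z] card_bool_Ln[of k] by auto
    then show "Q z * (\<Sum>x'\<in>TT z - {X z}. \<Sum>e\<in>FF. if e x' = e (X z) then 1 else 0)
        = Q z * (real (card (TT z - {X z})) * (real (card FF) / 2^k))" by simp
  qed
  also have "\<dots> \<le> (\<Sum>z\<in>Z. Q z * (real (card FF) * (M / 2^k)))"
  proof (rule sum_mono)
    fix z assume z: "z \<in> Z"
    have "real (card (TT z - {X z})) \<le> M"
      using card[OF z] card_Diff1_le[of "TT z" "X z"] by (meson of_nat_le_iff order_trans)
    then have "real (card (TT z - {X z})) * (real (card FF) / 2^k) \<le> M * (real (card FF) / 2^k)"
      by (rule mult_right_mono) simp
    then have "Q z * (real (card (TT z - {X z})) * (real (card FF) / 2^k)) \<le> Q z * (M * (real (card FF) / 2^k))"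
      by (rule mult_left_mono[OF _ Q0[OF z]])
    then show "Q z * (real (card (TT z - {X z})) * (real (card FF) / 2^k)) \<le> Q z * (real (card FF) * (M / 2^k))"
      by (simp add: algebra_simps)
  qed
  also have "\<dots> = (\<Sum>z\<in>Z. Q z) * (real (card FF) * (M / 2^k))" by (rule sum_distrib_right[symmetric])
  also have "\<dots> \<le> 1 * (real (card FF) * (M / 2^k))"
    using M0 Q1 by (intro mult_right_mono) auto
  finally show ?thesis by simp
qed



lemma achiev:
  fixes P :: "('x::finite \<times> 'y::finite) pmf"
  assumes n: "n > 0" and d: "\<delta> > 0"
  shows "\<exists>T dec1 dec2. depth T = nat \<lceil>real n * (cond_entropy_XY P + 2*\<delta>)\<rceil> + nat \<lceil>real n * (cond_entropy_YX P + 2*\<delta>)\<rceil>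
     \<and> 1 - VV P / (real n * \<delta>^2) - 2 * 2 powr (- (real n * \<delta>))
        \<le> success_prob P n (return_pmf 0) (return_pmf 0) (return_pmf 0) T dec1 dec2"
proof -
  define H1 where "H1 = cond_entropy_XY P"
  define H2 where "H2 = cond_entropy_YX P"
  define k1 where "k1 = nat \<lceil>real n * (H1 + 2*\<delta>)\<rceil>"
  define k2 where "k2 = nat \<lceil>real n * (H2 + 2*\<delta>)\<rceil>"
  define c1 where "c1 = 2 powr (- (real n * (H1 + \<delta>)))"
  define c2 where "c2 = 2 powr (- (real n * (H2 + \<delta>)))"
  define T1 where "T1 ys = {xs \<in> Ln n. c1 \<le> W1 P xs ys}" for ys
  define T2 where "T2 xs = {ys \<in> Ln n. c2 \<le> W2 P xs ys}" for xs
  define G where "G = Good P n \<delta>"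
  define F1 where "F1 = PiE (Ln n :: 'x list set) (\<lambda>_. Ln k1 :: bool list set)"
  define F2 where "F2 = PiE (Ln n :: 'y list set) (\<lambda>_. Ln k2 :: bool list set)"
  have finG: "finite G" unfolding G_def Good_def using finite_Ln[of n] by auto
  have GL: "zs \<in> G \<Longrightarrow> zs \<in> Ln n" for zs unfolding G_def Good_def by auto
  have sumG: "(\<Sum>zs\<in>G. Pn P zs) \<le> 1"
  proof -
    have "(\<Sum>zs\<in>G. Pn P zs) \<le> (\<Sum>zs\<in>Ln n. Pn P zs)"
      by (rule sum_mono2[OF finite_Ln]) (auto simp: GL Pn_nonneg)
    then show ?thesis by (simp add: sum_Pn)
  qed
  have c1p: "c1 > 0" "c2 > 0" unfolding c1_def c2_def by auto
  have cardT1: "real (card (T1 ys)) \<le> 1 / c1" if "ys \<in> Ln n" for ys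
  proof -
    have "length ys = n" using that by (simp add: Ln_def)
    then show ?thesis unfolding T1_def
      by (intro card_level_set[OF finite_Ln W1_nonneg _ c1p(1)]) (use sum_W1[where ys=ys and P=P] in simp)
  qed
  have cardT2: "real (card (T2 xs)) \<le> 1 / c2" if "xs \<in> Ln n" for xs
  proof -
    have "length xs = n" using that by (simp add: Ln_def)
    then show ?thesis unfolding T2_def
      by (intro card_level_set[OF finite_Ln W2_nonneg _ c1p(2)]) (use sum_W2[where xs=xs and P=P] in simp)
  qed
  have r1: "(1/c1) / 2^k1 \<le> 2 powr (- (real n * \<delta>))"
    unfolding c1_def k1_def by (rule ratio_bound) (rule real_nat_ceiling_ge)
  have r2: "(1/c2) / 2^k2 \<le> 2 powr (- (real n * \<delta>))"
    unfolding c2_def k2_def by (rule ratio_bound) (rule real_nat_ceiling_ge)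
  define Err1 where "Err1 e = (\<Sum>zs\<in>G. Pn P zs * (\<Sum>x'\<in>T1 (map snd zs) - {map fst zs}. if e x' = e (map fst zs) then 1 else 0))"
    for e :: "'x list \<Rightarrow> bool list"
  define Err2 where "Err2 e = (\<Sum>zs\<in>G. Pn P zs * (\<Sum>y'\<in>T2 (map fst zs) - {map snd zs}. if e y' = e (map snd zs) then 1 else 0))"
    for e :: "'y list \<Rightarrow> bool list"
  have finF1: "finite F1" unfolding F1_def by (simp add: finite_PiE finite_Ln)
  have finF2: "finite F2" unfolding F2_def by (simp add: finite_PiE finite_Ln)
  have neF1: "F1 \<noteq> {}" unfolding F1_def using Ln_nonempty by (simp add: PiE_eq_empty_iff)
  have neF2: "F2 \<noteq> {}" unfolding F2_def using Ln_nonempty by (simp add: PiE_eq_empty_iff)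
  have avg1: "(\<Sum>e\<in>F1. Err1 e) \<le> real (card F1) * 2 powr (- (real n * \<delta>))"
  proof -
    have "(\<Sum>e\<in>F1. Err1 e) \<le> real (card F1) * ((1/c1) / 2^k1)"
      unfolding Err1_def F1_def
    proof (rule hash_avg[OF finG _ sumG _ _ _ finite_Ln])
      fix zs assume zs: "zs \<in> G"
      then have l: "length zs = n" using GL by (simp add: Ln_def)
      show "0 \<le> Pn P zs" by (simp add: Pn_nonneg)
      show "map fst zs \<in> Ln n" using l by (simp add: Ln_def)
      show "T1 (map snd zs) \<subseteq> Ln n" by (auto simp: T1_def)
      show "real (card (T1 (map snd zs))) \<le> 1/c1" using l by (intro cardT1) (simp add: Ln_def)
    next
      show "0 \<le> 1/c1" using c1p by simp
    qed
    also have "\<dots> \<le> real (card F1) * 2 powr (- (real n * \<delta>))"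
      by (rule mult_left_mono[OF r1]) simp
    finally show ?thesis .
  qed
  have avg2: "(\<Sum>e\<in>F2. Err2 e) \<le> real (card F2) * 2 powr (- (real n * \<delta>))"
  proof -
    have "(\<Sum>e\<in>F2. Err2 e) \<le> real (card F2) * ((1/c2) / 2^k2)"
      unfolding Err2_def F2_def
    proof (rule hash_avg[OF finG _ sumG _ _ _ finite_Ln])
      fix zs assume zs: "zs \<in> G"
      then have l: "length zs = n" using GL by (simp add: Ln_def)
      show "0 \<le> Pn P zs" by (simp add: Pn_nonneg)
      show "map snd zs \<in> Ln n" using l by (simp add: Ln_def)
      show "T2 (map fst zs) \<subseteq> Ln n" by (auto simp: T2_def)
      show "real (card (T2 (map fst zs))) \<le> 1/c2" using l by (intro cardT2) (simp add: Ln_def)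
    next
      show "0 \<le> 1/c2" using c1p by simp
    qed
    also have "\<dots> \<le> real (card F2) * 2 powr (- (real n * \<delta>))"
      by (rule mult_left_mono[OF r2]) simp
    finally show ?thesis .
  qed
  obtain e1 where e1: "e1 \<in> F1" "Err1 e1 \<le> 2 powr (- (real n * \<delta>))"
    using exists_below_avg[OF finF1 neF1 avg1] by blast
  obtain e2 where e2: "e2 \<in> F2" "Err2 e2 \<le> 2 powr (- (real n * \<delta>))"
    using exists_below_avg[OF finF2 neF2 avg2] by blast
  have len1: "length (e1 xs) = k1" if "xs \<in> Ln n" for xs
    using PiE_mem[OF e1(1)[unfolded F1_def] that] by (simp add: Ln_def)
  have len2: "length (e2 ys) = k2" if "ys \<in> Ln n" for ys
    using PiE_mem[OF e2(1)[unfolded F2_def] that] by (simp add: Ln_def)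
  define T :: "('x, 'y) protocol" where
    "T = sendA 0 k1 (\<lambda>a. e1 (fst a)) (sendB 0 k2 (\<lambda>b. e2 (fst b)) Leaf)"
  define dec1 where "dec1 xs tr (ux::nat) (u::nat) = (SOME ys. ys \<in> T2 xs \<and> e2 ys = drop k1 tr)" for xs tr ux u
  define dec2 where "dec2 ys tr (uy::nat) (u::nat) = (SOME xs. xs \<in> T1 ys \<and> e1 xs = take k1 tr)" for ys tr uy u
  have depthT: "depth T = k1 + k2" by (simp add: T_def depth_sendA depth_sendB)
  have trT: "transcript T (xs, ux, u) (ys, uy, u) = e1 xs @ e2 ys" if "xs \<in> Ln n" "ys \<in> Ln n" for xs ys ux uy u
    unfolding T_def transcript_sendA transcript_sendB using len1[OF that(1)] len2[OF that(2)]
    by (simp add: map_nth_len)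
  define C1 where "C1 = {zs. \<exists>x'\<in>T1 (map snd zs). x' \<noteq> map fst zs \<and> e1 x' = e1 (map fst zs)}"
  define C2 where "C2 = {zs. \<exists>y'\<in>T2 (map fst zs). y' \<noteq> map snd zs \<and> e2 y' = e2 (map snd zs)}"
  define S' where "S' = {xys. let xs = map fst xys; ys = map snd xys;
      tr = transcript T (xs, 0::nat, 0::nat) (ys, 0::nat, 0::nat) in dec1 xs tr 0 0 = ys \<and> dec2 ys tr 0 0 = xs}"
  have succ: "success_prob P n (return_pmf 0) (return_pmf 0) (return_pmf 0) T dec1 dec2 = (\<Sum>zs\<in>S' \<inter> Ln n. Pn P zs)"
  proof -
    have "(do { xys \<leftarrow> iid_pmf n P; ux \<leftarrow> return_pmf (0::nat); uy \<leftarrow> return_pmf (0::nat); u \<leftarrow> return_pmf (0::nat);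
             return_pmf (xys, ux, uy, u) }) = map_pmf (\<lambda>xys. (xys, 0, 0, 0)) (iid_pmf n P)"
      by (simp add: bind_return_pmf map_pmf_def)
    then show ?thesis unfolding success_prob_def
      by (simp add: prob_iid vimage_def S'_def)
  qed
  have sub: "G - C1 - C2 \<subseteq> S' \<inter> Ln n"
  proof
    fix zs assume zs: "zs \<in> G - C1 - C2"
    define xs where "xs = map fst zs"
    define ys where "ys = map snd zs"
    have zL: "zs \<in> Ln n" using zs GL by auto
    have xL: "xs \<in> Ln n" "ys \<in> Ln n" using zL by (auto simp: xs_def ys_def Ln_def)
    have tr: "transcript T (xs, 0::nat, 0::nat) (ys, 0::nat, 0::nat) = e1 xs @ e2 ys" by (rule trT[OF xL])
    have tk: "take k1 (e1 xs @ e2 ys) = e1 xs" "drop k1 (e1 xs @ e2 ys) = e2 ys" using len1[OF xL(1)] by auto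
    have inT1: "xs \<in> T1 ys" using Good_T1[of zs P n \<delta>] zs xL unfolding T1_def c1_def H1_def xs_def ys_def G_def by auto
    have inT2: "ys \<in> T2 xs" using Good_T2[of zs P n \<delta>] zs xL unfolding T2_def c2_def H2_def xs_def ys_def G_def by auto
    have u1: "x = xs" if "x \<in> T1 ys \<and> e1 x = e1 xs" for x
      using zs that unfolding C1_def xs_def ys_def by auto
    have u2: "y = ys" if "y \<in> T2 xs \<and> e2 y = e2 ys" for y
      using zs that unfolding C2_def xs_def ys_def by auto
    have "dec2 ys (e1 xs @ e2 ys) 0 0 = xs" unfolding dec2_def tk
      by (rule some_equality) (use inT1 u1 in auto)
    moreover have "dec1 xs (e1 xs @ e2 ys) 0 0 = ys" unfolding dec1_def tk
      by (rule some_equality) (use inT2 u2 in auto)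
    ultimately show "zs \<in> S' \<inter> Ln n" using zL tr unfolding S'_def by (simp add: xs_def ys_def Let_def)
  qed
  have bC1: "(\<Sum>zs\<in>G \<inter> C1. Pn P zs) \<le> Err1 e1"
  proof -
    have "(\<Sum>zs\<in>G \<inter> C1. Pn P zs) = (\<Sum>zs\<in>G. if zs \<in> C1 then Pn P zs else 0)"
      using finG by (simp add: sum.inter_filter[symmetric] Int_def conj_commute)
    also have "\<dots> \<le> Err1 e1" unfolding Err1_def
    proof (rule sum_mono)
      fix zs assume zs: "zs \<in> G"
      let ?I = "\<Sum>x'\<in>T1 (map snd zs) - {map fst zs}. if e1 x' = e1 (map fst zs) then 1 else (0::real)"
      have I0: "0 \<le> ?I" by (simp add: sum_nonneg)
      have I1: "1 \<le> ?I" if zC: "zs \<in> C1"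
      proof -
        obtain x' where x': "x' \<in> T1 (map snd zs)" "x' \<noteq> map fst zs" "e1 x' = e1 (map fst zs)"
          using zC unfolding C1_def by blast
        have fin: "finite (T1 (map snd zs) - {map fst zs})" unfolding T1_def by (rule finite_Diff, rule finite_subset[OF _ finite_Ln[of n]]) auto
        have "(if e1 x' = e1 (map fst zs) then 1 else (0::real)) \<le> ?I"
          by (rule member_le_sum[OF _ _ fin]) (use x' in auto)
        then show ?thesis using x' by simp
      qed
      show "(if zs \<in> C1 then Pn P zs else 0) \<le> Pn P zs * ?I"
        using I0 I1 Pn_nonneg[of P zs] by (auto intro: mult_nonneg_nonneg) (metis mult.right_neutral mult_left_mono)
    qed
    finally show ?thesis .
  qed
  have bC2: "(\<Sum>zs\<in>G \<inter> C2. Pn P zs) \<le> Err2 e2"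
  proof -
    have "(\<Sum>zs\<in>G \<inter> C2. Pn P zs) = (\<Sum>zs\<in>G. if zs \<in> C2 then Pn P zs else 0)"
      using finG by (simp add: sum.inter_filter[symmetric] Int_def conj_commute)
    also have "\<dots> \<le> Err2 e2" unfolding Err2_def
    proof (rule sum_mono)
      fix zs assume zs: "zs \<in> G"
      let ?I = "\<Sum>y'\<in>T2 (map fst zs) - {map snd zs}. if e2 y' = e2 (map snd zs) then 1 else (0::real)"
      have I0: "0 \<le> ?I" by (simp add: sum_nonneg)
      have I1: "1 \<le> ?I" if zC: "zs \<in> C2"
      proof -
        obtain y' where y': "y' \<in> T2 (map fst zs)" "y' \<noteq> map snd zs" "e2 y' = e2 (map snd zs)"
          using zC unfolding C2_def by blast
        have fin: "finite (T2 (map fst zs) - {map snd zs})" unfolding T2_def by (rule finite_Diff, rule finite_subset[OF _ finite_Ln[of n]]) auto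
        have "(if e2 y' = e2 (map snd zs) then 1 else (0::real)) \<le> ?I"
          by (rule member_le_sum[OF _ _ fin]) (use y' in auto)
        then show ?thesis using y' by simp
      qed
      show "(if zs \<in> C2 then Pn P zs else 0) \<le> Pn P zs * ?I"
        using I0 I1 Pn_nonneg[of P zs] by (auto intro: mult_nonneg_nonneg) (metis mult.right_neutral mult_left_mono)
    qed
    finally show ?thesis .
  qed
  have split: "(\<Sum>zs\<in>G. Pn P zs) \<le> (\<Sum>zs\<in>G - C1 - C2. Pn P zs) + (\<Sum>zs\<in>G \<inter> C1. Pn P zs) + (\<Sum>zs\<in>G \<inter> C2. Pn P zs)"
  proof -
    have "(\<Sum>zs\<in>G. Pn P zs) \<le> (\<Sum>zs\<in>G. (if zs \<in> G - C1 - C2 then Pn P zs else 0)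
        + (if zs \<in> C1 then Pn P zs else 0) + (if zs \<in> C2 then Pn P zs else 0))"
      by (rule sum_mono) (auto simp: Pn_nonneg)
    also have "\<dots> = (\<Sum>zs\<in>G - C1 - C2. Pn P zs) + (\<Sum>zs\<in>G \<inter> C1. Pn P zs) + (\<Sum>zs\<in>G \<inter> C2. Pn P zs)"
      using finG by (simp add: sum.distrib sum.inter_filter[symmetric] Int_def Diff_eq conj_commute) (intro arg_cong[where f="sum (Pn P)"], blast)
    finally show ?thesis .
  qed
  have sumG1: "(\<Sum>zs\<in>G. Pn P zs) \<ge> 1 - VV P / (real n * \<delta>^2)"
  proof -
    have "(\<Sum>zs\<in>Ln n. Pn P zs) = (\<Sum>zs\<in>Ln n - G. Pn P zs) + (\<Sum>zs\<in>G. Pn P zs)"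
      by (rule sum.subset_diff) (auto simp: GL finite_Ln)
    then show ?thesis using sum_Pn[where n=n and p=P] bad_bound[OF n d, where P=P] unfolding G_def by linarith
  qed
  have "(\<Sum>zs\<in>G - C1 - C2. Pn P zs) \<le> (\<Sum>zs\<in>S' \<inter> Ln n. Pn P zs)"
    by (rule sum_mono2[OF _ sub]) (auto simp: Pn_nonneg finite_Ln)
  then have "1 - VV P / (real n * \<delta>^2) - 2 * 2 powr (- (real n * \<delta>)) \<le> success_prob P n (return_pmf 0) (return_pmf 0) (return_pmf 0) T dec1 dec2"
    using succ split sumG1 bC1 bC2 e1(2) e2(2) by linarith
  then show ?thesis using depthT unfolding k1_def k2_def H1_def H2_def by blast
qed



lemma fX_nonneg: "0 \<le> fX P z" for P :: "('x::finite \<times> 'y::finite) pmf"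
proof (cases "pmf P z = 0")
  case True then show ?thesis by (simp add: fX_def)
next
  case False
  obtain a b where z: "z = (a,b)" by (cases z)
  have p: "pmf P z > 0" using False pmf_nonneg[of P z] by linarith
  have m: "pmf P z \<le> marg_Y P (snd z)" using marg_Y_ge[of P a b] z by simp
  then have m0: "marg_Y P (snd z) > 0" using p by linarith
  have "log 2 (pmf P z / marg_Y P (snd z)) \<le> log 2 1"
    using p m0 m by (subst log_le_cancel_iff) auto
  then show ?thesis using False by (simp add: fX_def)
qed

lemma gY_nonneg: "0 \<le> gY P z" for P :: "('x::finite \<times> 'y::finite) pmf"
proof (cases "pmf P z = 0")
  case True then show ?thesis by (simp add: gY_def)
next
  case False
  obtain a b where z: "z = (a,b)" by (cases z)
  have p: "pmf P z > 0" using False pmf_nonneg[of P z] by linarith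
  have m: "pmf P z \<le> marg_X P (fst z)" using marg_X_ge[of P a b] z by simp
  then have m0: "marg_X P (fst z) > 0" using p by linarith
  have "log 2 (pmf P z / marg_X P (fst z)) \<le> log 2 1"
    using p m0 m by (subst log_le_cancel_iff) auto
  then show ?thesis using False by (simp add: gY_def)
qed

lemma H1_nonneg: "0 \<le> cond_entropy_XY P" for P :: "('x::finite \<times> 'y::finite) pmf"
  unfolding H1_eq by (intro sum_nonneg mult_nonneg_nonneg) (auto simp: fX_nonneg)

lemma H2_nonneg: "0 \<le> cond_entropy_YX P" for P :: "('x::finite \<times> 'y::finite) pmf"
  unfolding H2_eq by (intro sum_nonneg mult_nonneg_nonneg) (auto simp: gY_nonneg)

lemma half_aux: "(A::real) \<le> v + s \<Longrightarrow> v \<le> A/2 \<Longrightarrow> A/2 \<le> s" by linarith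

lemma lower_depth:
  fixes P :: "('x::finite \<times> 'y::finite) pmf"
  assumes e: "0 < \<epsilon>" "\<epsilon> < 1" and n: "n > 0" and d: "\<delta> > 0"
    and small: "VV P / (real n * \<delta>^2) \<le> (1-\<epsilon>)/2"
    and s: "success_prob P n PUX PUY PU T dec1 dec2 \<ge> 1 - \<epsilon>"
  shows "real (depth T) \<ge> real n * (cond_entropy_XY P + cond_entropy_YX P - 2*\<delta>) - 1 + log 2 (((1-\<epsilon>)/2)^2)"
proof -
  define E where "E = real n * (cond_entropy_XY P + cond_entropy_YX P - 2*\<delta>)"
  define a where "a = (1-\<epsilon>)/2"
  define X where "X = 2^(depth T+1) * 2 powr (- E)"
  have a0: "a > 0" using e by (simp add: a_def)
  have X0: "X \<ge> 0" unfolding X_def by simp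
  have "1 - \<epsilon> \<le> VV P/(real n*\<delta>^2) + sqrt X"
    using s success_le[OF n d, of P PUX PUY PU T dec1 dec2] unfolding X_def E_def by linarith
  then have "a \<le> sqrt X" using small unfolding a_def by (rule half_aux)
  then have "a^2 \<le> (sqrt X)^2" using a0 by (intro power_mono) auto
  then have aX: "a^2 \<le> X" using X0 by simp
  have "X = 2 powr (real (depth T + 1) - E)"
  proof -
    have "(2::real)^(depth T+1) = 2 powr (real (depth T + 1))" by (rule powr_realpow[symmetric]) simp
    then show ?thesis unfolding X_def by (simp only: powr_diff powr_minus_divide divide_inverse)
  qed
  then have "log 2 (a^2) \<le> log 2 (2 powr (real (depth T + 1) - E))"
    using aX a0 by (subst log_le_cancel_iff) auto
  then have "log 2 (a^2) \<le> real (depth T + 1) - E" by simp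
  then show ?thesis unfolding E_def a_def by simp
qed

definition Dset :: "('x \<times> 'y) pmf \<Rightarrow> real \<Rightarrow> nat \<Rightarrow> nat set" where
  "Dset P \<epsilon> n = {depth T | T PUX PUY PU dec1 dec2. success_prob P n PUX PUY PU T dec1 dec2 \<ge> 1 - \<epsilon>}"

lemma L_eps_Dset: "L_eps P \<epsilon> n = real (Inf (Dset P \<epsilon> n))"
  unfolding L_eps_def Dset_def by simp

lemma upper_L:
  fixes P :: "('x::finite \<times> 'y::finite) pmf"
  assumes n: "n > 0" and d: "\<delta> > 0"
    and small: "VV P / (real n * \<delta>^2) + 2 * 2 powr (- (real n * \<delta>)) \<le> \<epsilon>"
  shows "L_eps P \<epsilon> n \<le> real n * (cond_entropy_XY P + cond_entropy_YX P + 4*\<delta>) + 2"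
    and "Dset P \<epsilon> n \<noteq> {}"
proof -
  obtain T dec1 dec2 where T: "depth T = nat \<lceil>real n * (cond_entropy_XY P + 2*\<delta>)\<rceil> + nat \<lceil>real n * (cond_entropy_YX P + 2*\<delta>)\<rceil>"
    "1 - VV P / (real n * \<delta>^2) - 2 * 2 powr (- (real n * \<delta>)) \<le> success_prob P n (return_pmf 0) (return_pmf 0) (return_pmf 0) T dec1 dec2"
    using achiev[OF n d, of P] by blast
  have "1 - \<epsilon> \<le> success_prob P n (return_pmf 0) (return_pmf 0) (return_pmf 0) T dec1 dec2"
    using T(2) small by linarith
  then have mem: "depth T \<in> Dset P \<epsilon> n"
    unfolding Dset_def by blast
  then show "Dset P \<epsilon> n \<noteq> {}" by blast
  have "Inf (Dset P \<epsilon> n) \<le> depth T" by (rule cInf_lower[OF mem]) simp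
  then have "L_eps P \<epsilon> n \<le> real (depth T)" unfolding L_eps_Dset by simp
  also have "\<dots> \<le> real n * (cond_entropy_XY P + 2*\<delta>) + 1 + (real n * (cond_entropy_YX P + 2*\<delta>) + 1)"
  proof -
    have h: "real (nat \<lceil>x\<rceil>) \<le> x + 1" if "x \<ge> 0" for x :: real
      using that of_int_ceiling_le_add_one[of x] by linarith
    have "real n * (cond_entropy_XY P + 2*\<delta>) \<ge> 0" "real n * (cond_entropy_YX P + 2*\<delta>) \<ge> 0"
      using H1_nonneg[of P] H2_nonneg[of P] d by auto
    then have "real (nat \<lceil>real n * (cond_entropy_XY P + 2*\<delta>)\<rceil>) + real (nat \<lceil>real n * (cond_entropy_YX P + 2*\<delta>)\<rceil>)
       \<le> real n * (cond_entropy_XY P + 2*\<delta>) + 1 + (real n * (cond_entropy_YX P + 2*\<delta>) + 1)"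
      using h by (intro add_mono) auto
    then show ?thesis unfolding T(1) by (simp only: of_nat_add)
  qed
  finally show "L_eps P \<epsilon> n \<le> real n * (cond_entropy_XY P + cond_entropy_YX P + 4*\<delta>) + 2"
    by (simp add: algebra_simps)
qed

lemma lower_L:
  fixes P :: "('x::finite \<times> 'y::finite) pmf"
  assumes e: "0 < \<epsilon>" "\<epsilon> < 1" and n: "n > 0" and d: "\<delta> > 0"
    and small: "VV P / (real n * \<delta>^2) \<le> (1-\<epsilon>)/2" and ne: "Dset P \<epsilon> n \<noteq> {}"
  shows "L_eps P \<epsilon> n \<ge> real n * (cond_entropy_XY P + cond_entropy_YX P - 2*\<delta>) - 1 + log 2 (((1-\<epsilon>)/2)^2)"
proof -
  have "Inf (Dset P \<epsilon> n) \<in> Dset P \<epsilon> n" by (rule Inf_nat_def1[OF ne])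
  then obtain T PUX PUY PU dec1 dec2 where T: "Inf (Dset P \<epsilon> n) = depth T"
      "success_prob P n PUX PUY PU T dec1 dec2 \<ge> 1 - \<epsilon>"
    unfolding Dset_def by blast
  show ?thesis unfolding L_eps_Dset T(1) by (rule lower_depth[OF e n d small T(2)])
qed



lemma ev_const_over_n: "t > 0 \<Longrightarrow> eventually (\<lambda>n. c / real n < t) sequentially" for c t :: real
  using order_tendstoD(2)[OF lim_const_over_n[of c]] by simp

lemma powr_seq:
  assumes d: "\<delta> > 0"
  shows "(\<lambda>n. 2 powr (- (real n * \<delta>))) \<longlonglongrightarrow> (0::real)"
proof -
  have eq: "2 powr (- (real n * \<delta>)) = (2 powr (-\<delta>))^n" for n
  proof -
    have "(2 powr (-\<delta>))^n = (2 powr (-\<delta>)) powr (real n)" by (rule powr_realpow[symmetric]) simp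
    also have "\<dots> = 2 powr (- (real n * \<delta>))" by (simp add: powr_powr mult.commute)
    finally show ?thesis by simp
  qed
  have "norm (2 powr (-\<delta>) :: real) < 1" using powr_less_one[of 2 "-\<delta>"] d by simp
  then show ?thesis unfolding eq by (rule LIMSEQ_power_zero)
qed

lemma div_aux1: "(n::real) > 0 \<Longrightarrow> L \<le> n * A + 2 \<Longrightarrow> L / n \<le> A + 2 / n"
  by (simp add: field_simps)
lemma div_aux2: "(n::real) > 0 \<Longrightarrow> n * A - K \<le> L \<Longrightarrow> A - K / n \<le> L / n"
proof -
  assume n: "n > 0" and h: "n * A - K \<le> L"
  have "A - K / n = (n * A - K) / n" using n by (simp add: field_simps)
  also have "\<dots> \<le> L / n" using h n by (simp add: divide_right_mono)
  finally show ?thesis .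
qed

theorem mainTheorem8:
  fixes P :: "('x::finite \<times> 'y::finite) pmf" and \<epsilon> :: real
  assumes "0 < \<epsilon>" and "\<epsilon> < 1"
  shows "(\<lambda>n. L_eps P \<epsilon> n / real n) \<longlonglongrightarrow> cond_entropy_XY P + cond_entropy_YX P"
proof (rule LIMSEQ_I)
  fix r :: real assume r: "0 < r"
  have e: "0 < \<epsilon>" "\<epsilon> < 1" by fact+
  define \<delta> where "\<delta> = r/8"
  define H where "H = cond_entropy_XY P + cond_entropy_YX P"
  define K where "K = 1 - log 2 (((1-\<epsilon>)/2)^2)"
  have d: "\<delta> > 0" using r by (simp add: \<delta>_def)
  have "eventually (\<lambda>n. VV P / \<delta>^2 / real n < min ((1-\<epsilon>)/2) (\<epsilon>/2)) sequentially"
    by (rule ev_const_over_n) (use e in simp)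
  moreover have "eventually (\<lambda>n. 2 powr (- (real n * \<delta>)) < \<epsilon>/4) sequentially"
    using order_tendstoD(2)[OF powr_seq[OF d], of "\<epsilon>/4"] e by simp
  moreover have "eventually (\<lambda>n. 2 / real n < r/2) sequentially"
    by (rule ev_const_over_n) (use r in simp)
  moreover have "eventually (\<lambda>n. \<bar>K\<bar> / real n < r/2) sequentially"
    by (rule ev_const_over_n) (use r in simp)
  moreover have "eventually (\<lambda>n. n > 0) sequentially" by (rule eventually_gt_at_top)
  ultimately have "eventually (\<lambda>n. VV P / \<delta>^2 / real n < min ((1-\<epsilon>)/2) (\<epsilon>/2) \<and> 2 powr (- (real n * \<delta>)) < \<epsilon>/4
      \<and> 2 / real n < r/2 \<and> \<bar>K\<bar> / real n < r/2 \<and> n > 0) sequentially"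
    by eventually_elim auto
  then obtain N where N: "\<And>n. n \<ge> N \<Longrightarrow> VV P / \<delta>^2 / real n < min ((1-\<epsilon>)/2) (\<epsilon>/2) \<and> 2 powr (- (real n * \<delta>)) < \<epsilon>/4
      \<and> 2 / real n < r/2 \<and> \<bar>K\<bar> / real n < r/2 \<and> n > 0"
    unfolding eventually_sequentially by blast
  show "\<exists>no. \<forall>n\<ge>no. norm (L_eps P \<epsilon> n / real n - H) < r"
  proof (intro exI allI impI)
    fix n assume "n \<ge> N"
    note Nn = N[OF this]
    have n: "n > 0" using Nn by simp
    have vv: "VV P / (real n * \<delta>^2) = VV P / \<delta>^2 / real n" by simp
    have c1: "VV P / \<delta>^2 / real n < min ((1-\<epsilon>)/2) (\<epsilon>/2)" and c2: "2 powr (- (real n * \<delta>)) < \<epsilon>/4"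
      using Nn by blast+
    have s1: "VV P / (real n * \<delta>^2) \<le> (1-\<epsilon>)/2" using c1 unfolding vv min_less_iff_conj by linarith
    have s2: "VV P / (real n * \<delta>^2) + 2 * 2 powr (- (real n * \<delta>)) \<le> \<epsilon>"
      using c1 c2 unfolding vv min_less_iff_conj by linarith
    have up: "L_eps P \<epsilon> n \<le> real n * (H + 4*\<delta>) + 2" using upper_L(1)[OF n d s2] by (simp add: H_def)
    have ne: "Dset P \<epsilon> n \<noteq> {}" by (rule upper_L(2)[OF n d s2])
    have lo: "real n * (H - 2*\<delta>) - K \<le> L_eps P \<epsilon> n"
      using lower_L[OF e n d s1 ne] by (simp add: H_def K_def algebra_simps)
    have nr: "real n > 0" using n by simp
    have u: "L_eps P \<epsilon> n / real n \<le> H + 4*\<delta> + 2 / real n" using div_aux1[OF nr up] .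
    have l: "H - 2*\<delta> - K / real n \<le> L_eps P \<epsilon> n / real n" using div_aux2[OF nr lo] .
    have "K / real n \<le> \<bar>K\<bar> / real n" using nr by (simp add: divide_right_mono)
    then show "norm (L_eps P \<epsilon> n / real n - H) < r"
      using u l Nn r unfolding \<delta>_def by (simp add: abs_less_iff)
  qed
qed


end
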